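(* Let $K$ be a simplicial complex, $X\cup Y=K_0$ a cover of its vertex set, $A:=X\cap Y$, and let $P$ be the subposet of the simplex poset of $K$ given by $P:=\{\sigma\in K\mid\sigma\subset X\text{ or }\sigma\subset Y\text{ or }\sigma\cap A\neq\emptyset\}$. Then the poset inclusion $f\colon K_X\cup K_Y\hookrightarrow P$ is a weak equivalence (i.e. induces a weak equivalence of nerves).
   Context: A simplicial complex is a collection of finite nonempty subsets of a fixed set closed under taking nonempty subsets; $K_0$ is its vertex set, and its simplices form a poset under inclusion (the simplex category). For a set $B$, $K_B$ is the subcomplex of simplices of $K$ contained in $B$; $K_X\cup K_Y$ is regarded as a subposet of $P$. *)

theory Defs
  imports "HOL-Analysis.Analysis"
begin

definition simplicial_complex :: "'a set set \<Rightarrow> bool" where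
  "simplicial_complex K \<longleftrightarrow>
     (\<forall>\<sigma>\<in>K. finite \<sigma> \<and> \<sigma> \<noteq> {}) \<and>
     (\<forall>\<sigma>\<in>K. \<forall>\<tau>. \<tau> \<subseteq> \<sigma> \<and> \<tau> \<noteq> {} \<longrightarrow> \<tau> \<in> K)"

definition vertex_set :: "'a set set \<Rightarrow> 'a set" where
  "vertex_set K = \<Union>K"

definition full_subcomplex :: "'a set set \<Rightarrow> 'a set \<Rightarrow> 'a set set" where
  "full_subcomplex K B = {\<sigma>\<in>K. \<sigma> \<subseteq> B}"

definition nerve :: "'b set set \<Rightarrow> 'b set set set" where
  "nerve S = {c. finite c \<and> c \<noteq> {} \<and> c \<subseteq> S \<and>
                 (\<forall>x\<in>c. \<forall>y\<in>c. x \<subseteq> y \<or> y \<subseteq> x)}"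

text \<open>Geometric realization of an abstract simplicial complex L, as barycentric
coordinate functions, with the coherent (weak) topology with respect to the closed
simplices (each carrying its Euclidean topology).\<close>
definition closed_simplex :: "'v set \<Rightarrow> ('v \<Rightarrow> real) set" where
  "closed_simplex \<sigma> = {\<alpha>. (\<forall>v. 0 \<le> \<alpha> v) \<and> (\<forall>v. v \<notin> \<sigma> \<longrightarrow> \<alpha> v = 0) \<and> sum \<alpha> \<sigma> = 1}"

definition realization_carrier :: "'v set set \<Rightarrow> ('v \<Rightarrow> real) set" where
  "realization_carrier L = (\<Union>\<sigma>\<in>L. closed_simplex \<sigma>)"

definition realization :: "'v set set \<Rightarrow> ('v \<Rightarrow> real) topology" where
  "realization L = topology (\<lambda>U. U \<subseteq> realization_carrier L \<and>
     (\<forall>\<sigma>\<in>L. openin (subtopology (product_topology (\<lambda>_. euclideanreal) UNIV) (closed_simplex \<sigma>))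
                     (U \<inter> closed_simplex \<sigma>)))"

text \<open>Weak homotopy equivalence: continuous, and bijective on all pointed homotopy
classes of maps from spheres, for all n and all basepoints (so on pi_0 and all pi_n).\<close>
definition sphere_base :: "nat \<Rightarrow> real" where
  "sphere_base = (\<lambda>i. if i = 0 then 1 else 0)"

definition weak_homotopy_equivalence ::
  "'a topology \<Rightarrow> 'b topology \<Rightarrow> ('a \<Rightarrow> 'b) \<Rightarrow> bool" where
  "weak_homotopy_equivalence X Y f \<longleftrightarrow>
     continuous_map X Y f \<and>
     (\<forall>n. \<forall>x\<in>topspace X.
        (\<forall>g. continuous_map (nsphere n) Y g \<and> g sphere_base = f x \<longrightarrow>
           (\<exists>h. continuous_map (nsphere n) X h \<and> h sphere_base = x \<and>
                homotopic_with (\<lambda>k. k sphere_base = f x) (nsphere n) Y (f \<circ> h) g)) \<and>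
        (\<forall>h1 h2. continuous_map (nsphere n) X h1 \<and> h1 sphere_base = x \<and>
                 continuous_map (nsphere n) X h2 \<and> h2 sphere_base = x \<and>
                 homotopic_with (\<lambda>k. k sphere_base = f x) (nsphere n) Y (f \<circ> h1) (f \<circ> h2)
                 \<longrightarrow> homotopic_with (\<lambda>k. k sphere_base = x) (nsphere n) X h1 h2))"

definition poset_inclusion_weak_equivalence :: "'b set set \<Rightarrow> 'b set set \<Rightarrow> bool" where
  "poset_inclusion_weak_equivalence Q P \<longleftrightarrow> Q \<subseteq> P \<and>
     weak_homotopy_equivalence (realization (nerve Q)) (realization (nerve P)) id"

end

theory Submission
  imports Defs
begin

abbreviation PT :: "('v \<Rightarrow> real) topology" where
  "PT \<equiv> product_topology (\<lambda>_. euclideanreal) UNIV"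

definition spt :: "('v \<Rightarrow> real) \<Rightarrow> 'v set" where
  "spt x = {v. x v \<noteq> 0}"

definition chn :: "'a set set \<Rightarrow> bool" where
  "chn D \<longleftrightarrow> (\<forall>u\<in>D. \<forall>v\<in>D. u \<subseteq> v \<or> v \<subseteq> u)"

lemma istopology_real:
  "istopology (\<lambda>U. U \<subseteq> realization_carrier L \<and>
     (\<forall>\<sigma>\<in>L. openin (subtopology PT (closed_simplex \<sigma>)) (U \<inter> closed_simplex \<sigma>)))"
proof -
  have 1: "openin (subtopology PT (closed_simplex \<sigma>)) (S \<inter> T \<inter> closed_simplex \<sigma>)"
    if "openin (subtopology PT (closed_simplex \<sigma>)) (S \<inter> closed_simplex \<sigma>)"
       "openin (subtopology PT (closed_simplex \<sigma>)) (T \<inter> closed_simplex \<sigma>)" for S T \<sigma>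
  proof -
    have "S \<inter> T \<inter> closed_simplex \<sigma> = (S \<inter> closed_simplex \<sigma>) \<inter> (T \<inter> closed_simplex \<sigma>)" by blast
    then show ?thesis using that by (simp add: openin_Int)
  qed
  have 2: "openin (subtopology PT (closed_simplex \<sigma>)) (\<Union>K \<inter> closed_simplex \<sigma>)"
    if "\<forall>U\<in>K. openin (subtopology PT (closed_simplex \<sigma>)) (U \<inter> closed_simplex \<sigma>)" for K \<sigma>
  proof -
    have "\<Union>K \<inter> closed_simplex \<sigma> = \<Union>((\<lambda>U. U \<inter> closed_simplex \<sigma>) ` K)" by blast
    moreover have "openin (subtopology PT (closed_simplex \<sigma>)) (\<Union>((\<lambda>U. U \<inter> closed_simplex \<sigma>) ` K))"
      by (rule openin_Union) (use that in blast)
    ultimately show ?thesis by simp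
  qed
  show ?thesis
    unfolding istopology_def
    apply (rule conjI; intro allI impI)
    subgoal for S T by (auto intro: 1)
    subgoal for K by (auto intro: 2)
    done
qed

lemma openin_realization:
  "openin (realization L) U \<longleftrightarrow> U \<subseteq> realization_carrier L \<and>
     (\<forall>\<sigma>\<in>L. openin (subtopology PT (closed_simplex \<sigma>)) (U \<inter> closed_simplex \<sigma>))"
  unfolding realization_def by (simp add: istopology_real)

lemma closed_simplex_sub_carrier: "\<sigma> \<in> L \<Longrightarrow> closed_simplex \<sigma> \<subseteq> realization_carrier L"
  unfolding realization_carrier_def by blast

lemma topspace_realization: "topspace (realization L) = realization_carrier L"
proof -
  have "openin (realization L) (realization_carrier L)"
    unfolding openin_realization
  proof (intro conjI ballI subset_refl)
    fix \<sigma> assume "\<sigma> \<in> L"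
    then have "realization_carrier L \<inter> closed_simplex \<sigma> = topspace (subtopology PT (closed_simplex \<sigma>))"
      using closed_simplex_sub_carrier by fastforce
    then show "openin (subtopology PT (closed_simplex \<sigma>)) (realization_carrier L \<inter> closed_simplex \<sigma>)"
      by (metis openin_topspace)
  qed
  then show ?thesis
    by (metis openin_realization openin_subset subset_antisym openin_topspace)
qed

lemma closed_simplex_iff:
  "x \<in> closed_simplex C \<longleftrightarrow> (\<forall>v. 0 \<le> x v) \<and> spt x \<subseteq> C \<and> sum x C = 1"
  unfolding closed_simplex_def spt_def by auto

lemma nerve_sub:
  assumes "C \<in> nerve S" "D \<subseteq> C" "D \<noteq> {}" shows "D \<in> nerve S"
proof -
  have c: "finite C" "C \<subseteq> S" "\<forall>u\<in>C. \<forall>v\<in>C. u \<subseteq> v \<or> v \<subseteq> u"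
    using assms(1) unfolding nerve_def by simp_all
  have "\<forall>u\<in>D. \<forall>v\<in>D. u \<subseteq> v \<or> v \<subseteq> u"
  proof (intro ballI)
    fix u v assume "u \<in> D" "v \<in> D"
    then have "u \<in> C" "v \<in> C" using assms(2) by auto
    then show "u \<subseteq> v \<or> v \<subseteq> u" using c(3) by simp
  qed
  moreover have "finite D" using c(1) assms(2) finite_subset by auto
  ultimately show ?thesis unfolding nerve_def using assms(2,3) c(2) by simp
qed

lemma nerve_mono: "Q \<subseteq> P \<Longrightarrow> nerve Q \<subseteq> nerve P"
  unfolding nerve_def by auto

lemma carrier_iff:
  "x \<in> realization_carrier (nerve S) \<longleftrightarrow>
     (\<forall>v. 0 \<le> x v) \<and> spt x \<in> nerve S \<and> sum x (spt x) = 1"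
proof
  assume "x \<in> realization_carrier (nerve S)"
  then obtain C where C: "C \<in> nerve S" "x \<in> closed_simplex C"
    unfolding realization_carrier_def by blast
  then have x: "\<forall>v. 0 \<le> x v" "spt x \<subseteq> C" "sum x C = 1" by (auto simp: closed_simplex_iff)
  have fC: "finite C" using C unfolding nerve_def by auto
  have "sum x (spt x) = sum x C"
    by (rule sum.mono_neutral_left) (use fC x in \<open>auto simp: spt_def\<close>)
  then have s: "sum x (spt x) = 1" using x by simp
  then have "spt x \<noteq> {}" by auto
  then have "spt x \<in> nerve S" using nerve_sub C x by blast
  then show "(\<forall>v. 0 \<le> x v) \<and> spt x \<in> nerve S \<and> sum x (spt x) = 1" using x s by blast
next
  assume "(\<forall>v. 0 \<le> x v) \<and> spt x \<in> nerve S \<and> sum x (spt x) = 1"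
  then have "x \<in> closed_simplex (spt x)" "spt x \<in> nerve S" by (auto simp: closed_simplex_iff)
  then show "x \<in> realization_carrier (nerve S)" unfolding realization_carrier_def by blast
qed

lemma carrier_finite_spt: "x \<in> realization_carrier (nerve S) \<Longrightarrow> finite (spt x)"
proof -
  assume "x \<in> realization_carrier (nerve S)"
  then have "spt x \<in> nerve S" by (simp add: carrier_iff)
  then show ?thesis by (simp add: nerve_def)
qed

lemma carrier_le1:
  assumes "x \<in> realization_carrier (nerve S)" shows "x v \<le> 1"
proof (cases "v \<in> spt x")
  case True
  have "x v \<le> sum x (spt x)"
    by (rule member_le_sum) (use assms True carrier_finite_spt in \<open>auto simp: carrier_iff\<close>)
  then show ?thesis using assms by (simp add: carrier_iff)
next
  case False then show ?thesis by (simp add: spt_def)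
qed

lemma closedin_closed_simplex:
  fixes C :: "'v set"
  assumes "finite C" shows "closedin PT (closed_simplex C)"
proof -
  have eq: "closed_simplex C = (\<Inter>v. {x. x v \<in> (if v \<in> C then {0..} else {0})}) \<inter> {x. sum x C \<in> {1}}"
  proof (rule set_eqI, rule iffI)
    fix x :: "'v \<Rightarrow> real" assume "x \<in> closed_simplex C"
    then have "0 \<le> x v" "v \<notin> C \<Longrightarrow> x v = 0" "sum x C = 1" for v
      unfolding closed_simplex_def by simp_all
    then show "x \<in> (\<Inter>v. {x. x v \<in> (if v \<in> C then {0..} else {0})}) \<inter> {x. sum x C \<in> {1}}"
      by simp
  next
    fix x :: "'v \<Rightarrow> real" assume h: "x \<in> (\<Inter>v. {x. x v \<in> (if v \<in> C then {0..} else {0})}) \<inter> {x. sum x C \<in> {1}}"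
    have hv: "x v \<in> (if v \<in> C then {0..} else {0})" for v using h by blast
    have "0 \<le> x v" for v using hv[of v] by (cases "v \<in> C") simp_all
    moreover have "x v = 0" if "v \<notin> C" for v using hv[of v] that by simp
    moreover have "sum x C = 1" using h by simp
    ultimately show "x \<in> closed_simplex C" unfolding closed_simplex_def by simp
  qed
  have c1: "closedin PT {x::'v\<Rightarrow>real. x v \<in> (if v \<in> C then {0..} else {0})}" for v
  proof -
    have "closedin PT {x \<in> topspace PT. x v \<in> (if v \<in> C then {0..} else {0})}"
      by (rule closedin_continuous_map_preimage[OF continuous_map_product_projection]) auto
    then show ?thesis by simp
  qed
  have c2: "closedin PT {x::'v\<Rightarrow>real. sum x C \<in> {1}}"
  proof -
    have "continuous_map PT euclideanreal (\<lambda>x::'v\<Rightarrow>real. sum x C)"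
      by (intro continuous_map_sum) (auto intro: continuous_map_product_projection assms)
    then have "closedin PT {x \<in> topspace PT. sum x C \<in> {1}}"
      by (rule closedin_continuous_map_preimage) auto
    then show ?thesis by simp
  qed
  show ?thesis unfolding eq
    by (intro closedin_Int closedin_Inter c2) (use c1 in auto)
qed

lemma cont_real_to_PT:
  fixes L :: "'v set set"
  assumes "continuous_map Z (realization L) f"
  shows "continuous_map Z PT f"
proof -
  have "continuous_map (realization L) PT (\<lambda>x. x)"
    unfolding continuous_map_def
  proof (intro conjI allI impI)
    show "(\<lambda>x. x) \<in> topspace (realization L) \<rightarrow> topspace PT" by auto
    fix U :: "('v \<Rightarrow> real) set" assume U: "openin PT U"
    show "openin (realization L) {x \<in> topspace (realization L). x \<in> U}"
      unfolding openin_realization topspace_realization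
    proof (intro conjI ballI)
      fix \<sigma> assume "\<sigma> \<in> L"
      then have "{x \<in> realization_carrier L. x \<in> U} \<inter> closed_simplex \<sigma> = closed_simplex \<sigma> \<inter> U"
        using closed_simplex_sub_carrier by blast
      then show "openin (subtopology PT (closed_simplex \<sigma>)) ({x \<in> realization_carrier L. x \<in> U} \<inter> closed_simplex \<sigma>)"
        using U by (simp add: openin_subtopology_Int2)
    qed auto
  qed
  then show ?thesis using continuous_map_compose[OF assms] by (simp add: o_def)
qed


lemma cont_into_real:
  fixes f :: "'z \<Rightarrow> 'v set \<Rightarrow> real"
  assumes cf: "continuous_map Z PT f" and fE: "finite E"
    and im: "\<And>z. z \<in> topspace Z \<Longrightarrow> f z \<in> realization_carrier (nerve S) \<and> spt (f z) \<subseteq> E"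
  shows "continuous_map Z (realization (nerve S)) f"
  unfolding continuous_map_def
proof (intro conjI allI impI)
  show "f \<in> topspace Z \<rightarrow> topspace (realization (nerve S))"
    using im by (auto simp: topspace_realization)
  fix U assume U: "openin (realization (nerve S)) U"
  let ?DD = "nerve S \<inter> Pow E"
  have fDD: "finite ?DD" using fE by simp
  have "\<forall>\<sigma>\<in>nerve S. openin (subtopology PT (closed_simplex \<sigma>)) (U \<inter> closed_simplex \<sigma>)"
    using U by (simp add: openin_realization)
  then have "\<forall>D\<in>?DD. \<exists>Ob. openin PT Ob \<and> U \<inter> closed_simplex D = Ob \<inter> closed_simplex D"
    unfolding openin_subtopology by blast
  from bchoice[OF this] obtain Ob where Ob0: "\<forall>D\<in>?DD. openin PT (Ob D) \<and> U \<inter> closed_simplex D = Ob D \<inter> closed_simplex D"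
    by blast
  have Ob: "openin PT (Ob D) \<and> U \<inter> closed_simplex D = Ob D \<inter> closed_simplex D" if "D \<in> ?DD" for D
    using Ob0 that by blast
  let ?Cl = "\<Union>D\<in>?DD. closed_simplex D - Ob D"
  have fin: "D \<in> ?DD \<Longrightarrow> finite D" for D by (auto simp: nerve_def)
  have "closedin PT ?Cl"
    using fDD by (intro closedin_Union) (auto intro!: closedin_diff closedin_closed_simplex fin Ob[THEN conjunct1])
  then have cl: "closedin Z {z \<in> topspace Z. f z \<in> ?Cl}"
    by (rule closedin_continuous_map_preimage[OF cf])
  have eq: "{z \<in> topspace Z. f z \<in> U} = topspace Z - {z \<in> topspace Z. f z \<in> ?Cl}"
  proof (intro set_eqI iffI)
    fix z assume z: "z \<in> {z \<in> topspace Z. f z \<in> U}"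
    have "f z \<notin> closed_simplex D - Ob D" if "D \<in> ?DD" for D
    proof
      assume "f z \<in> closed_simplex D - Ob D"
      moreover have "f z \<in> U" using z by simp
      ultimately have "f z \<in> U \<inter> closed_simplex D" "f z \<notin> Ob D \<inter> closed_simplex D" by auto
      then show False using Ob[OF that] by simp
    qed
    then show "z \<in> topspace Z - {z \<in> topspace Z. f z \<in> ?Cl}" using z by blast
  next
    fix z assume z: "z \<in> topspace Z - {z \<in> topspace Z. f z \<in> ?Cl}"
    then have zt: "z \<in> topspace Z" by blast
    let ?D = "spt (f z)"
    have D: "?D \<in> ?DD" "f z \<in> closed_simplex ?D"
      using im[OF zt] by (auto simp: carrier_iff closed_simplex_iff)
    then have "f z \<notin> closed_simplex ?D - Ob ?D" using z by blast
    then have "f z \<in> U \<inter> closed_simplex ?D" using Ob[OF D(1)] D(2) by blast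
    then show "z \<in> {z \<in> topspace Z. f z \<in> U}" using zt by blast
  qed
  show "openin Z {x \<in> topspace Z. f x \<in> U}"
    unfolding eq by (rule openin_diff[OF openin_topspace cl])
qed

lemma t1_PT: "t1_space (PT :: ('v \<Rightarrow> real) topology)"
  by (simp add: t1_space_product_topology Hausdorff_imp_t1_space)

lemma finite_closedin_PT:
  fixes T :: "('v \<Rightarrow> real) set"
  assumes "finite T" shows "closedin PT T"
proof -
  have "t1_space (PT::('v\<Rightarrow>real) topology)" by (rule t1_PT)
  then show ?thesis using assms unfolding t1_space_closedin_finite by simp
qed

lemma compact_finite_support:
  fixes K :: "('v set \<Rightarrow> real) set"
  assumes cK: "compactin (realization (nerve S)) K"
  shows "\<exists>E. finite E \<and> (\<forall>x\<in>K. spt x \<subseteq> E)"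
proof -
  let ?R = "realization (nerve S)"
  let ?car = "realization_carrier (nerve S)"
  have Kc: "K \<subseteq> ?car" using compactin_subset_topspace[OF cK] by (simp add: topspace_realization)
  define Sig where "Sig = spt ` K"
  define pick where "pick = (\<lambda>\<sigma>. SOME x. x \<in> K \<and> spt x = \<sigma>)"
  have pick: "pick \<sigma> \<in> K \<and> spt (pick \<sigma>) = \<sigma>" if "\<sigma> \<in> Sig" for \<sigma>
  proof -
    have ex: "\<exists>x. x \<in> K \<and> spt x = \<sigma>" using that Sig_def by blast
    show ?thesis unfolding pick_def by (rule someI_ex[OF ex])
  qed
  define Dp where "Dp = pick ` Sig"
  have DpK: "Dp \<subseteq> K" using pick Dp_def by blast
  have clT: "closedin ?R T" if TD: "T \<subseteq> Dp" for T
    unfolding closedin_def topspace_realization openin_realization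
  proof (intro conjI ballI)
    show "T \<subseteq> ?car" using TD DpK Kc by blast
    show "?car - T \<subseteq> ?car" by blast
    fix C assume C: "C \<in> nerve S"
    have fC: "finite C" using C by (simp add: nerve_def)
    have "T \<inter> closed_simplex C \<subseteq> pick ` Pow C"
    proof
      fix x assume x: "x \<in> T \<inter> closed_simplex C"
      then obtain \<sigma> where \<sigma>: "\<sigma> \<in> Sig" "x = pick \<sigma>" using TD Dp_def by blast
      then have "\<sigma> = spt x" using pick by simp
      then have "\<sigma> \<subseteq> C" using x by (simp add: closed_simplex_iff)
      then show "x \<in> pick ` Pow C" using \<sigma> by blast
    qed
    then have "finite (T \<inter> closed_simplex C)" using fC finite_subset by blast
    then have "closedin PT (T \<inter> closed_simplex C)" by (rule finite_closedin_PT)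
    then have "openin (subtopology PT (closed_simplex C)) (closed_simplex C - T \<inter> closed_simplex C)"
      by (intro openin_subtopology_diff_closed) auto
    moreover have "(?car - T) \<inter> closed_simplex C = closed_simplex C - T \<inter> closed_simplex C"
      using closed_simplex_sub_carrier[OF C] by blast
    ultimately show "openin (subtopology PT (closed_simplex C)) ((?car - T) \<inter> closed_simplex C)"
      by simp
  qed
  have cD: "compactin ?R Dp" by (rule closed_compactin[OF cK DpK clT]) simp
  define U where "U = (\<lambda>d. topspace ?R - (Dp - {d}))"
  have "openin ?R (U d)" if "d \<in> Dp" for d
    unfolding U_def by (rule openin_diff[OF openin_topspace clT]) blast
  then have op: "\<forall>V\<in>U ` Dp. openin ?R V" by blast
  have "Dp \<subseteq> topspace ?R" using compactin_subset_topspace[OF cD] .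
  then have cov: "Dp \<subseteq> \<Union>(U ` Dp)" unfolding U_def by auto
  have "\<exists>F. finite F \<and> F \<subseteq> U ` Dp \<and> Dp \<subseteq> \<Union>F"
    using cD op cov unfolding compactin_def by blast
  then obtain F where F: "finite F" "F \<subseteq> U ` Dp" "Dp \<subseteq> \<Union>F" by blast
  have "Dp = (\<Union>V\<in>F. V \<inter> Dp)" using F by blast
  moreover have "finite (V \<inter> Dp)" if VF: "V \<in> F" for V
  proof -
    obtain d where "V = U d" using VF F by blast
    then have "V \<inter> Dp \<subseteq> {d}" unfolding U_def by blast
    then show ?thesis using finite_subset by blast
  qed
  ultimately have fDp: "finite Dp" using F(1) by (metis finite_UN_I)
  have "spt ` Dp = (\<lambda>\<sigma>. spt (pick \<sigma>)) ` Sig" by (simp add: Dp_def image_image)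
  also have "\<dots> = (\<lambda>\<sigma>. \<sigma>) ` Sig" by (rule image_cong) (simp_all add: pick)
  finally have "Sig = spt ` Dp" by simp
  then have fSig: "finite Sig" using fDp by simp
  have "\<forall>\<sigma>\<in>Sig. finite \<sigma>" using Kc carrier_finite_spt Sig_def by blast
  then have "finite (\<Union>Sig)" using fSig by blast
  moreover have "\<forall>x\<in>K. spt x \<subseteq> \<Union>Sig" using Sig_def by blast
  ultimately show ?thesis by blast
qed


definition lo :: "('v \<Rightarrow> real) \<Rightarrow> 'v set \<Rightarrow> 'v set \<Rightarrow> real" where
  "lo x E c = Max (insert 0 (x ` (E - c)))"
definition wa :: "('v \<Rightarrow> real) \<Rightarrow> 'v set \<Rightarrow> real \<Rightarrow> 'v set \<Rightarrow> real" where
  "wa x E s c = max 0 (Min (x ` c) - max (lo x E c) s)"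
definition wb :: "('v \<Rightarrow> real) \<Rightarrow> 'v set \<Rightarrow> real \<Rightarrow> 'v set \<Rightarrow> real" where
  "wb x E s c = max 0 (min (Min (x ` c)) s - lo x E c)"
definition wt :: "('v \<Rightarrow> real) \<Rightarrow> 'v set \<Rightarrow> 'v set \<Rightarrow> real" where
  "wt x E c = max 0 (Min (x ` c) - lo x E c)"

lemma wa_wb: "wa x E s c + wb x E s c = wt x E c"
  unfolding wa_def wb_def wt_def by (auto simp: max_def min_def)

lemma wa_ge0: "0 \<le> wa x E s c" and wb_ge0: "0 \<le> wb x E s c" and wt_ge0: "0 \<le> wt x E c"
  by (simp_all add: wa_def wb_def wt_def)

lemma lo_ge0: "finite E \<Longrightarrow> 0 \<le> lo x E c"
  unfolding lo_def by (rule Max_ge) auto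

lemma lo_ge: "finite E \<Longrightarrow> v \<in> E - c \<Longrightarrow> x v \<le> lo x E c"
  unfolding lo_def by (rule Max_ge) auto

lemma Min_shift:
  fixes x :: "'v \<Rightarrow> real"
  assumes "finite c" "c \<noteq> {}"
  shows "Min ((\<lambda>v. x v - k) ` c) = Min (x ` c) - k"
proof -
  have "mono (\<lambda>t::real. t - k)" by (simp add: mono_def)
  then have "(\<lambda>t. t - k) (Min (x ` c)) = Min ((\<lambda>t. t - k) ` (x ` c))"
    by (rule mono_Min_commute) (use assms in auto)
  then show ?thesis by (simp add: image_image)
qed

lemma layer_cake:
  fixes x :: "'v \<Rightarrow> real"
  assumes "finite E" "\<forall>v\<in>E. 0 \<le> x v" "p \<in> E"
  shows "(\<Sum>c\<in>{c\<in>Pow E. p \<in> c}. wt x E c) = x p"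
  using assms
proof (induction "card E" arbitrary: E x p rule: less_induct)
  case less
  have fE: "finite E" and nn: "\<forall>v\<in>E. 0 \<le> x v" and pE: "p \<in> E" using less.prems by auto
  have ne: "E \<noteq> {}" using pE by auto
  have "Min (x ` E) \<in> x ` E" using fE ne by simp
  then obtain z where z: "z \<in> E" "x z = Min (x ` E)" by (metis imageE)
  have zmin: "x z \<le> x v" if "v \<in> E" for v using z fE that by simp
  have z0: "0 \<le> x z" using nn z(1) by blast
  define E' where "E' = E - {z}"
  define y where "y = (\<lambda>v. x v - x z)"
  have fE': "finite E'" using fE by (simp add: E'_def)
  have cardlt: "card E' < card E" unfolding E'_def by (rule card_Diff1_less[OF fE z(1)])
  have ynn: "\<forall>v\<in>E'. 0 \<le> y v" using zmin by (simp add: y_def E'_def)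
  have zE': "z \<notin> E'" by (simp add: E'_def)
  have EE': "E = insert z E'" using z by (auto simp: E'_def)
  have L1: "wt x E c = 0" if h: "c \<subseteq> E" "z \<in> c" "c \<noteq> E" for c
  proof -
    obtain v where v: "v \<in> E - c" using h by blast
    have fc: "finite c" using h fE finite_subset by blast
    have "Min (x ` c) \<le> x z" using h fc by simp
    also have "x z \<le> x v" using v zmin by simp
    also have "x v \<le> lo x E c" using lo_ge[OF fE v] .
    finally show ?thesis unfolding wt_def by simp
  qed
  have L2: "wt x E E = x z"
  proof -
    have "lo x E E = 0" by (simp add: lo_def)
    then show ?thesis using z z0 by (simp add: wt_def)
  qed
  have L3: "wt x E c = wt y E' c" if h: "c \<subseteq> E'" "c \<noteq> {}" for c
  proof -
    have fc: "finite c" using h fE' finite_subset by blast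
    have m: "Min (y ` c) = Min (x ` c) - x z"
      unfolding y_def by (rule Min_shift[OF fc h(2)])
    define T where "T = E' - c"
    have fT: "finite T" using fE' by (simp add: T_def)
    have EcT: "E - c = insert z T" using h zE' by (auto simp: T_def EE')
    define M where "M = Max (insert 0 (x ` insert z T))"
    have loxM: "lo x E c = M" by (simp add: lo_def M_def EcT)
    have fin: "finite (insert 0 (x ` insert z T))" using fT by simp
    have Mge: "u \<le> M" if hu: "u \<in> insert 0 (x ` insert z T)" for u
      unfolding M_def by (rule Max_ge[OF fin hu])
    have Min: "M \<in> insert 0 (x ` insert z T)" unfolding M_def by (rule Max_in[OF fin]) simp
    have xzM: "x z \<le> M" using Mge by simp
    have "Max (insert 0 (y ` T)) = M - x z"
    proof (rule Max_eqI)
      show "finite (insert 0 (y ` T))" using fT by simp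
      fix u assume "u \<in> insert 0 (y ` T)"
      then show "u \<le> M - x z"
      proof
        assume "u = 0" then show ?thesis using xzM by simp
      next
        assume "u \<in> y ` T"
        then obtain v where "v \<in> T" "u = x v - x z" by (auto simp: y_def)
        then show ?thesis using Mge[of "x v"] by simp
      qed
    next
      show "M - x z \<in> insert 0 (y ` T)"
      proof -
        have "M = 0 \<or> M = x z \<or> M \<in> x ` T" using Min by auto
        then show ?thesis
      proof (elim disjE)
        assume "M = 0" then have "x z = 0" using xzM z0 by simp
        then show ?thesis using \<open>M = 0\<close> by simp
      next
        assume "M = x z" then show ?thesis by simp
      next
        assume "M \<in> x ` T"
        then obtain v where "v \<in> T" "M = x v" by auto
        then show ?thesis by (auto simp: y_def)
      qed
      qed
    qed
    then have "lo y E' c = M - x z" unfolding lo_def T_def .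
    then have "lo y E' c = lo x E c - x z" using loxM by simp
    then show ?thesis unfolding wt_def using m by simp
  qed
  have PowE: "{c\<in>Pow E. p \<in> c} = {c\<in>Pow E'. p \<in> c} \<union> insert z ` {d\<in>Pow E'. p \<in> insert z d}"
  proof (rule set_eqI, rule iffI)
    fix c assume c: "c \<in> {c\<in>Pow E. p \<in> c}"
    show "c \<in> {c\<in>Pow E'. p \<in> c} \<union> insert z ` {d\<in>Pow E'. p \<in> insert z d}"
    proof (cases "z \<in> c")
      case True
      then have "c = insert z (c - {z})" by blast
      moreover have "c - {z} \<in> {d\<in>Pow E'. p \<in> insert z d}" using c by (auto simp: E'_def)
      ultimately show ?thesis by blast
    next
      case False then show ?thesis using c by (auto simp: E'_def)
    qed
  next
    fix c assume "c \<in> {c\<in>Pow E'. p \<in> c} \<union> insert z ` {d\<in>Pow E'. p \<in> insert z d}"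
    then show "c \<in> {c\<in>Pow E. p \<in> c}" using EE' by auto
  qed
  have disj: "{c\<in>Pow E'. p \<in> c} \<inter> insert z ` {d\<in>Pow E'. p \<in> insert z d} = {}"
    using zE' by auto
  have inj: "inj_on (insert z) {d\<in>Pow E'. p \<in> insert z d}"
  proof (rule inj_onI)
    fix a b assume "a \<in> {d\<in>Pow E'. p \<in> insert z d}" "b \<in> {d\<in>Pow E'. p \<in> insert z d}" "insert z a = insert z b"
    then have "z \<notin> a" "z \<notin> b" using zE' by auto
    then show "a = b" using \<open>insert z a = insert z b\<close> by (metis Diff_insert_absorb)
  qed
  have S2: "(\<Sum>c\<in>insert z ` {d\<in>Pow E'. p \<in> insert z d}. wt x E c) = x z"
  proof -
    let ?D = "{d\<in>Pow E'. p \<in> insert z d}"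
    have "(\<Sum>c\<in>insert z ` ?D. wt x E c) = (\<Sum>d\<in>?D. wt x E (insert z d))"
      unfolding sum.reindex[OF inj] comp_def by (rule refl)
    also have "\<dots> = wt x E (insert z E') + (\<Sum>d\<in>?D - {E'}. wt x E (insert z d))"
    proof (rule sum.remove)
      show "finite ?D" using fE' by simp
      show "E' \<in> ?D" using pE EE' by auto
    qed
    also have "(\<Sum>d\<in>?D - {E'}. wt x E (insert z d)) = 0"
    proof (rule sum.neutral, rule ballI)
      fix d assume d: "d \<in> ?D - {E'}"
      have dE': "d \<subseteq> E'" "d \<noteq> E'" using d by auto
      have "insert z d \<noteq> E"
      proof
        assume "insert z d = E"
        then have "insert z d - {z} = insert z E' - {z}" using EE' by simp
        moreover have "z \<notin> d" using dE' zE' by blast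
        ultimately have "d = E'" using zE' by (simp add: Diff_insert_absorb)
        then show False using dE' by simp
      qed
      then show "wt x E (insert z d) = 0" using d EE' by (intro L1) auto
    qed
    finally show ?thesis using L2 EE' by simp
  qed
  show ?case
  proof (cases "p = z")
    case True
    then have "{c\<in>Pow E'. p \<in> c} = {}" using zE' by auto
    then have "{c\<in>Pow E. p \<in> c} = insert z ` {d\<in>Pow E'. p \<in> insert z d}" using PowE by (simp only: Un_empty_left)
    then show ?thesis using S2 True by simp
  next
    case False
    then have pE': "p \<in> E'" using pE by (simp add: E'_def)
    have "(\<Sum>c\<in>{c\<in>Pow E'. p \<in> c}. wt x E c) = (\<Sum>c\<in>{c\<in>Pow E'. p \<in> c}. wt y E' c)"
      by (rule sum.cong) (auto intro!: L3)
    also have "\<dots> = y p" using less.hyps[OF cardlt fE' ynn pE'] .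
    finally have S1: "(\<Sum>c\<in>{c\<in>Pow E'. p \<in> c}. wt x E c) = x p - x z" by (simp add: y_def)
    have "(\<Sum>c\<in>{c\<in>Pow E. p \<in> c}. wt x E c) =
          (\<Sum>c\<in>{c\<in>Pow E'. p \<in> c}. wt x E c) + (\<Sum>c\<in>insert z ` {d\<in>Pow E'. p \<in> insert z d}. wt x E c)"
      unfolding PowE by (rule sum.union_disjoint) (use fE' disj in auto)
    then show ?thesis using S1 S2 by simp
  qed
qed


definition Bf :: "'v set \<Rightarrow> 'v \<Rightarrow> real" where
  "Bf c = (\<lambda>w. if w \<in> c then 1 else 0)"

definition prism :: "'v set \<Rightarrow> real \<Rightarrow> ('v set \<Rightarrow> 'w \<Rightarrow> real) \<Rightarrow> ('v set \<Rightarrow> 'w \<Rightarrow> real)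
    \<Rightarrow> ('v \<Rightarrow> real) \<Rightarrow> ('w \<Rightarrow> real)" where
  "prism E s F1 F2 x = (\<lambda>w. \<Sum>c\<in>Pow E - {{}}. wa x E s c * F1 c w + wb x E s c * F2 c w)"

definition PR :: "real \<Rightarrow> ('v set \<Rightarrow> 'w \<Rightarrow> real) \<Rightarrow> ('v set \<Rightarrow> 'w \<Rightarrow> real)
    \<Rightarrow> ('v \<Rightarrow> real) \<Rightarrow> ('w \<Rightarrow> real)" where
  "PR s F1 F2 x = prism (spt x) s F1 F2 x"

definition LY :: "('v set \<Rightarrow> 'w \<Rightarrow> real) \<Rightarrow> ('v \<Rightarrow> real) \<Rightarrow> ('w \<Rightarrow> real)" where
  "LY F x = (\<lambda>w. \<Sum>c\<in>Pow (spt x) - {{}}. wt x (spt x) c * F c w)"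

lemma mass_Bf:
  fixes x :: "'v \<Rightarrow> real"
  assumes fE: "finite E" and nn: "\<forall>v. 0 \<le> x v" and sE: "spt x \<subseteq> E"
  shows "(\<lambda>w. \<Sum>c\<in>Pow E - {{}}. wt x E c * Bf c w) = x"
proof (rule ext)
  fix w
  show "(\<Sum>c\<in>Pow E - {{}}. wt x E c * Bf c w) = x w"
  proof (cases "w \<in> E")
    case True
    have "(\<Sum>c\<in>Pow E - {{}}. wt x E c * Bf c w) = (\<Sum>c\<in>Pow E - {{}}. if w \<in> c then wt x E c else 0)"
      by (rule sum.cong) (auto simp: Bf_def)
    also have "\<dots> = (\<Sum>c\<in>{c \<in> Pow E - {{}}. w \<in> c}. wt x E c)"
      by (rule sum.inter_filter[symmetric]) (use fE in simp)
    also have "{c \<in> Pow E - {{}}. w \<in> c} = {c \<in> Pow E. w \<in> c}" by auto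
    also have "(\<Sum>c\<in>{c\<in>Pow E. w \<in> c}. wt x E c) = x w"
      by (rule layer_cake) (use fE nn True in auto)
    finally show ?thesis .
  next
    case False
    then have "x w = 0" using sE by (auto simp: spt_def)
    moreover have "Bf c w = 0" if "c \<in> Pow E - {{}}" for c using that False by (auto simp: Bf_def)
    ultimately show ?thesis by simp
  qed
qed

lemma total_mass:
  fixes x :: "'v \<Rightarrow> real"
  assumes fE: "finite E" and nn: "\<forall>v. 0 \<le> x v" and sE: "spt x \<subseteq> E"
  shows "(\<Sum>c\<in>Pow E - {{}}. wt x E c * real (card c)) = sum x E"
proof -
  have cc: "real (card c) = (\<Sum>w\<in>E. Bf c w)" if "c \<in> Pow E - {{}}" for c
  proof -
    have "(\<Sum>w\<in>E. Bf c w) = (\<Sum>w\<in>E. if w \<in> c then 1 else 0)" by (simp add: Bf_def)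
    also have "\<dots> = (\<Sum>w\<in>{w\<in>E. w \<in> c}. 1)" using fE by (rule sum.inter_filter[symmetric])
    also have "{w\<in>E. w \<in> c} = c" using that by auto
    finally show ?thesis by simp
  qed
  have "(\<Sum>c\<in>Pow E - {{}}. wt x E c * real (card c)) = (\<Sum>c\<in>Pow E - {{}}. \<Sum>w\<in>E. wt x E c * Bf c w)"
    by (rule sum.cong) (simp_all add: cc sum_distrib_left)
  also have "\<dots> = (\<Sum>w\<in>E. \<Sum>c\<in>Pow E - {{}}. wt x E c * Bf c w)" by (rule sum.swap)
  also have "\<dots> = (\<Sum>w\<in>E. x w)"
    using mass_Bf[OF fE nn sE] by (metis (no_types, lifting))
  finally show ?thesis by simp
qed

lemma w_zero:
  fixes x :: "'v \<Rightarrow> real"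
  assumes fE: "finite E" and cE: "c \<subseteq> E" and pc: "p \<in> c" and xp: "x p = 0" and nn: "\<forall>v. 0 \<le> x v"
  shows "wa x E s c = 0" "wb x E s c = 0" "wt x E c = 0"
proof -
  have fc: "finite c" using fE cE finite_subset by blast
  have "Min (x ` c) \<le> 0" using fc pc xp by (metis Min_le finite_imageI imageI)
  moreover have "0 \<le> lo x E c" by (rule lo_ge0[OF fE])
  ultimately show "wa x E s c = 0" "wb x E s c = 0" "wt x E c = 0"
    unfolding wa_def wb_def wt_def by auto
qed

lemma lo_spt:
  fixes x :: "'v \<Rightarrow> real"
  assumes "spt x \<subseteq> E"
  shows "lo x E c = lo x (spt x) c"
proof -
  have "insert 0 (x ` (E - c)) = insert 0 (x ` (spt x - c))"
  proof (rule set_eqI, rule iffI)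
    fix u assume "u \<in> insert 0 (x ` (E - c))"
    then show "u \<in> insert 0 (x ` (spt x - c))" by (auto simp: spt_def)
  next
    fix u assume "u \<in> insert 0 (x ` (spt x - c))"
    then show "u \<in> insert 0 (x ` (E - c))" using assms by auto
  qed
  then show ?thesis by (simp add: lo_def)
qed

lemma prism_indep:
  fixes x :: "'v \<Rightarrow> real"
  assumes fE: "finite E" and sE: "spt x \<subseteq> E" and nn: "\<forall>v. 0 \<le> x v"
  shows "prism E s F1 F2 x = PR s F1 F2 x"
  unfolding PR_def prism_def
proof (rule ext, rule sum.mono_neutral_cong_right)
  fix w
  show "finite (Pow E - {{}})" using fE by simp
  show "Pow (spt x) - {{}} \<subseteq> Pow E - {{}}" using sE by auto
  show "\<forall>c\<in>Pow E - {{}} - (Pow (spt x) - {{}}). wa x E s c * F1 c w + wb x E s c * F2 c w = 0"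
  proof
    fix c assume c: "c \<in> Pow E - {{}} - (Pow (spt x) - {{}})"
    then obtain p where p: "p \<in> c" "p \<notin> spt x" by auto
    then have "x p = 0" by (simp add: spt_def)
    then show "wa x E s c * F1 c w + wb x E s c * F2 c w = 0"
      using w_zero[OF fE _ p(1) _ nn] c by auto
  qed
  fix c assume "c \<in> Pow (spt x) - {{}}"
  show "wa x E s c * F1 c w + wb x E s c * F2 c w = wa x (spt x) s c * F1 c w + wb x (spt x) s c * F2 c w"
    by (simp add: wa_def wb_def lo_spt[OF sE])
qed

lemma PR_0:
  fixes x :: "'v \<Rightarrow> real"
  assumes "finite (spt x)" "\<forall>v. 0 \<le> x v"
  shows "PR 0 F1 F2 x = LY F1 x"
  unfolding PR_def prism_def LY_def
proof (rule ext, rule sum.cong[OF refl])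
  fix w c
  have "0 \<le> lo x (spt x) c" by (rule lo_ge0[OF assms(1)])
  then have "wa x (spt x) 0 c = wt x (spt x) c" "wb x (spt x) 0 c = 0"
    unfolding wa_def wb_def wt_def by (auto simp: max_def min_def)
  then show "wa x (spt x) 0 c * F1 c w + wb x (spt x) 0 c * F2 c w = wt x (spt x) c * F1 c w" by simp
qed

lemma PR_1:
  fixes x :: "'v \<Rightarrow> real"
  assumes fS: "finite (spt x)" and le1: "\<forall>v. x v \<le> 1"
  shows "PR 1 F1 F2 x = LY F2 x"
  unfolding PR_def prism_def LY_def
proof (rule ext, rule sum.cong[OF refl])
  fix w c assume c: "c \<in> Pow (spt x) - {{}}"
  then obtain p where "p \<in> c" by auto
  moreover have "finite c" using c fS finite_subset by auto
  ultimately have "Min (x ` c) \<le> 1" using le1 by (meson Min_le finite_imageI imageI order_trans)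
  then have "wa x (spt x) 1 c = 0" "wb x (spt x) 1 c = wt x (spt x) c"
    unfolding wa_def wb_def wt_def by (auto simp: max_def min_def)
  then show "wa x (spt x) 1 c * F1 c w + wb x (spt x) 1 c * F2 c w = wt x (spt x) c * F2 c w" by simp
qed

lemma LY_Bf:
  fixes x :: "'v \<Rightarrow> real"
  assumes "finite (spt x)" "\<forall>v. 0 \<le> x v"
  shows "LY Bf x = x"
  unfolding LY_def by (rule mass_Bf[OF assms(1,2) subset_refl])

lemma PR_stat:
  fixes x :: "'v \<Rightarrow> real"
  assumes fS: "finite (spt x)" and nn: "\<forall>v. 0 \<le> x v"
    and F: "\<And>c. c \<subseteq> spt x \<Longrightarrow> c \<noteq> {} \<Longrightarrow> F1 c = Bf c \<and> F2 c = Bf c"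
  shows "PR s F1 F2 x = x"
proof -
  have "PR s F1 F2 x = LY Bf x"
    unfolding PR_def prism_def LY_def
  proof (rule ext, rule sum.cong[OF refl])
    fix w c assume "c \<in> Pow (spt x) - {{}}"
    then have "F1 c = Bf c" "F2 c = Bf c" using F by auto
    then have "wa x (spt x) s c * F1 c w + wb x (spt x) s c * F2 c w = (wa x (spt x) s c + wb x (spt x) s c) * Bf c w"
      by (simp add: distrib_right)
    then show "wa x (spt x) s c * F1 c w + wb x (spt x) s c * F2 c w = wt x (spt x) c * Bf c w"
      using wa_wb[of x "spt x" s c] by simp
  qed
  then show ?thesis using LY_Bf[OF fS nn] by simp
qed

lemma wt_pos_upper:
  fixes x :: "'v \<Rightarrow> real"
  assumes fE: "finite E" and cE: "c \<subseteq> E" and ne: "c \<noteq> {}" and pos: "0 < wt x E c" and pE: "p \<in> E"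
  shows "p \<in> c \<longleftrightarrow> Min (x ` c) \<le> x p"
proof
  have fc: "finite c" using fE cE finite_subset by blast
  assume "p \<in> c" then show "Min (x ` c) \<le> x p" using fc by simp
next
  assume m: "Min (x ` c) \<le> x p"
  show "p \<in> c"
  proof (rule ccontr)
    assume "p \<notin> c"
    then have "x p \<le> lo x E c" using lo_ge[OF fE] pE by blast
    then show False using pos m unfolding wt_def by (auto simp: max_def split: if_splits)
  qed
qed

lemma wt_pos_nested:
  fixes x :: "'v \<Rightarrow> real"
  assumes fE: "finite E" and c1: "c1 \<subseteq> E" "c1 \<noteq> {}" "0 < wt x E c1"
    and c2: "c2 \<subseteq> E" "c2 \<noteq> {}" "0 < wt x E c2"
  shows "c1 \<subseteq> c2 \<or> c2 \<subseteq> c1"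
proof (cases "Min (x ` c1) \<le> Min (x ` c2)")
  case True
  have "c2 \<subseteq> c1"
  proof
    fix p assume p: "p \<in> c2"
    then have "Min (x ` c2) \<le> x p" using wt_pos_upper[OF fE c2] c2 by blast
    then show "p \<in> c1" using wt_pos_upper[OF fE c1] p c2 True by auto
  qed
  then show ?thesis by simp
next
  case False
  have "c1 \<subseteq> c2"
  proof
    fix p assume p: "p \<in> c1"
    then have "Min (x ` c1) \<le> x p" using wt_pos_upper[OF fE c1] c1 by blast
    then show "p \<in> c2" using wt_pos_upper[OF fE c2] p c1 False by auto
  qed
  then show ?thesis by simp
qed

lemma wa_wb_sub:
  fixes x :: "'v \<Rightarrow> real"
  assumes fE: "finite E" and c1: "c1 \<subseteq> E" "c1 \<noteq> {}" "0 < wa x E s c1"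
    and c2: "c2 \<subseteq> E" "0 < wb x E s c2"
  shows "c1 \<subseteq> c2"
proof
  fix p assume p: "p \<in> c1"
  have fc: "finite c1" using fE c1 finite_subset by blast
  have "Min (x ` c1) \<le> x p" using fc p by simp
  moreover have "s < Min (x ` c1)" using c1(3) unfolding wa_def by (auto simp: max_def split: if_splits)
  moreover have "lo x E c2 < s" using c2(2) unfolding wb_def by (auto simp: max_def min_def split: if_splits)
  ultimately have "lo x E c2 < x p" by simp
  show "p \<in> c2"
  proof (rule ccontr)
    assume "p \<notin> c2"
    then have "x p \<le> lo x E c2" using lo_ge[OF fE] p c1(1) by blast
    then show False using \<open>lo x E c2 < x p\<close> by simp
  qed
qed

lemma wa_pos_wt: "0 < wa x E s c \<Longrightarrow> 0 < wt x E c"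
  using wa_wb[of x E s c] wb_ge0[of x E s c] by linarith
lemma wb_pos_wt: "0 < wb x E s c \<Longrightarrow> 0 < wt x E c"
  using wa_wb[of x E s c] wa_ge0[of x E s c] by linarith


lemma PR_in_carrier:
  fixes x :: "'v set \<Rightarrow> real" and F1 F2 :: "'v set set \<Rightarrow> 'w set \<Rightarrow> real"
  assumes x: "x \<in> realization_carrier (nerve P)"
    and m1: "\<And>c. c \<subseteq> spt x \<Longrightarrow> c \<noteq> {} \<Longrightarrow> (\<forall>w. 0 \<le> F1 c w) \<and> finite (spt (F1 c)) \<and>
               spt (F1 c) \<subseteq> P' \<and> sum (F1 c) (spt (F1 c)) = real (card c)"
    and m2: "\<And>c. c \<subseteq> spt x \<Longrightarrow> c \<noteq> {} \<Longrightarrow> (\<forall>w. 0 \<le> F2 c w) \<and> finite (spt (F2 c)) \<and>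
               spt (F2 c) \<subseteq> P' \<and> sum (F2 c) (spt (F2 c)) = real (card c)"
    and ch11: "\<And>c c'. c \<subseteq> c' \<Longrightarrow> c' \<subseteq> spt x \<Longrightarrow> c \<noteq> {} \<Longrightarrow> chn (spt (F1 c) \<union> spt (F1 c'))"
    and ch22: "\<And>c c'. c \<subseteq> c' \<Longrightarrow> c' \<subseteq> spt x \<Longrightarrow> c \<noteq> {} \<Longrightarrow> chn (spt (F2 c) \<union> spt (F2 c'))"
    and ch12: "\<And>c c'. c \<subseteq> c' \<Longrightarrow> c' \<subseteq> spt x \<Longrightarrow> c \<noteq> {} \<Longrightarrow> chn (spt (F1 c) \<union> spt (F2 c'))"
  shows "PR s F1 F2 x \<in> realization_carrier (nerve P')"
proof -
  define S where "S = spt x"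
  have fS: "finite S" using carrier_finite_spt[OF x] by (simp add: S_def)
  have nn: "\<forall>v. 0 \<le> x v" and sum1: "sum x S = 1" using x by (auto simp: carrier_iff S_def)
  define W1 where "W1 = {c \<in> Pow S - {{}}. 0 < wa x S s c}"
  define W2 where "W2 = {c \<in> Pow S - {{}}. 0 < wb x S s c}"
  define D where "D = (\<Union>c\<in>W1. spt (F1 c)) \<union> (\<Union>c\<in>W2. spt (F2 c))"
  define y where "y = PR s F1 F2 x"
  have y: "y = (\<lambda>w. \<Sum>c\<in>Pow S - {{}}. wa x S s c * F1 c w + wb x S s c * F2 c w)"
    by (simp add: y_def PR_def prism_def S_def)
  have ynn: "0 \<le> y w" for w
    unfolding y
  proof (rule sum_nonneg)
    fix c assume c: "c \<in> Pow S - {{}}"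
    then have "0 \<le> F1 c w" "0 \<le> F2 c w" using m1[of c] m2[of c] by (auto simp: S_def)
    then show "0 \<le> wa x S s c * F1 c w + wb x S s c * F2 c w"
      by (intro add_nonneg_nonneg mult_nonneg_nonneg wa_ge0 wb_ge0)
  qed
  have sptD: "spt y \<subseteq> D"
  proof
    fix w assume "w \<in> spt y"
    then have "(\<Sum>c\<in>Pow S - {{}}. wa x S s c * F1 c w + wb x S s c * F2 c w) \<noteq> 0"
      by (simp add: spt_def y)
    then obtain c where c: "c \<in> Pow S - {{}}" "wa x S s c * F1 c w + wb x S s c * F2 c w \<noteq> 0"
      by (meson sum.not_neutral_contains_not_neutral)
    then consider "wa x S s c * F1 c w \<noteq> 0" | "wb x S s c * F2 c w \<noteq> 0" by fastforce
    then show "w \<in> D"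
    proof cases
      case 1
      then have "0 < wa x S s c" "F1 c w \<noteq> 0" using wa_ge0[of x S s c] by auto
      then show ?thesis using c by (auto simp: D_def W1_def spt_def)
    next
      case 2
      then have "0 < wb x S s c" "F2 c w \<noteq> 0" using wb_ge0[of x S s c] by auto
      then show ?thesis using c by (auto simp: D_def W2_def spt_def)
    qed
  qed
  have fW: "finite W1" "finite W2" using fS by (auto simp: W1_def W2_def)
  have m1': "c \<in> W1 \<Longrightarrow> finite (spt (F1 c)) \<and> spt (F1 c) \<subseteq> P'" for c
    using m1[of c] by (auto simp: W1_def S_def)
  have m2': "c \<in> W2 \<Longrightarrow> finite (spt (F2 c)) \<and> spt (F2 c) \<subseteq> P'" for c
    using m2[of c] by (auto simp: W2_def S_def)
  have fD: "finite D" unfolding D_def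
    using fW m1' m2' by (intro finite_UnI finite_UN_I) auto
  have DP: "D \<subseteq> P'" unfolding D_def
    using m1' m2' by (intro Un_least UN_least) auto
  have W1wt: "c \<in> W1 \<Longrightarrow> c \<subseteq> S \<and> c \<noteq> {} \<and> 0 < wt x S c" for c
    using wa_pos_wt by (auto simp: W1_def)
  have W2wt: "c \<in> W2 \<Longrightarrow> c \<subseteq> S \<and> c \<noteq> {} \<and> 0 < wt x S c" for c
    using wb_pos_wt by (auto simp: W2_def)
  have chn_sym: "chn (A \<union> B) \<Longrightarrow> u \<in> A \<Longrightarrow> v \<in> B \<Longrightarrow> u \<subseteq> v \<or> v \<subseteq> u" for A B u v
    by (auto simp: chn_def)
  have nest: "c1 \<subseteq> c2 \<or> c2 \<subseteq> c1" if "c1 \<subseteq> S \<and> c1 \<noteq> {} \<and> 0 < wt x S c1" "c2 \<subseteq> S \<and> c2 \<noteq> {} \<and> 0 < wt x S c2" for c1 c2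
    using wt_pos_nested[OF fS] that by blast
  have c11: "u \<subseteq> v \<or> v \<subseteq> u" if "c1 \<in> W1" "u \<in> spt (F1 c1)" "c2 \<in> W1" "v \<in> spt (F1 c2)" for c1 c2 u v
  proof -
    have h1: "c1 \<subseteq> S" "c1 \<noteq> {}" "c2 \<subseteq> S" "c2 \<noteq> {}" using that W1wt by blast+
    from nest[OF W1wt[OF that(1)] W1wt[OF that(3)]] show ?thesis
    proof
      assume "c1 \<subseteq> c2"
      then have "chn (spt (F1 c1) \<union> spt (F1 c2))" using ch11 h1 by (simp add: S_def)
      then show ?thesis using chn_sym that(2,4) by blast
    next
      assume "c2 \<subseteq> c1"
      then have "chn (spt (F1 c2) \<union> spt (F1 c1))" using ch11 h1 by (simp add: S_def)
      then show ?thesis using chn_sym that(2,4) by blast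
    qed
  qed
  have c22: "u \<subseteq> v \<or> v \<subseteq> u" if "c1 \<in> W2" "u \<in> spt (F2 c1)" "c2 \<in> W2" "v \<in> spt (F2 c2)" for c1 c2 u v
  proof -
    have h1: "c1 \<subseteq> S" "c1 \<noteq> {}" "c2 \<subseteq> S" "c2 \<noteq> {}" using that W2wt by blast+
    from nest[OF W2wt[OF that(1)] W2wt[OF that(3)]] show ?thesis
    proof
      assume "c1 \<subseteq> c2"
      then have "chn (spt (F2 c1) \<union> spt (F2 c2))" using ch22 h1 by (simp add: S_def)
      then show ?thesis using chn_sym that(2,4) by blast
    next
      assume "c2 \<subseteq> c1"
      then have "chn (spt (F2 c2) \<union> spt (F2 c1))" using ch22 h1 by (simp add: S_def)
      then show ?thesis using chn_sym that(2,4) by blast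
    qed
  qed
  have c12: "u \<subseteq> v \<or> v \<subseteq> u" if "c1 \<in> W1" "u \<in> spt (F1 c1)" "c2 \<in> W2" "v \<in> spt (F2 c2)" for c1 c2 u v
  proof -
    have h1: "c1 \<subseteq> S" "c1 \<noteq> {}" "0 < wa x S s c1" using that(1) by (auto simp: W1_def)
    have h2: "c2 \<subseteq> S" "0 < wb x S s c2" using that(3) by (auto simp: W2_def)
    have "c1 \<subseteq> c2" by (rule wa_wb_sub[OF fS h1 h2])
    then have "chn (spt (F1 c1) \<union> spt (F2 c2))" using ch12 h1 h2 by (simp add: S_def)
    then show ?thesis using chn_sym that(2,4) by blast
  qed
  have chD: "chn D"
    unfolding chn_def
  proof (intro ballI)
    fix u v assume u: "u \<in> D" and v: "v \<in> D"
    from u consider c1 where "c1 \<in> W1" "u \<in> spt (F1 c1)" | c1 where "c1 \<in> W2" "u \<in> spt (F2 c1)"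
      unfolding D_def by blast
    then show "u \<subseteq> v \<or> v \<subseteq> u"
    proof cases
      case (1 c1)
      from v consider c2 where "c2 \<in> W1" "v \<in> spt (F1 c2)" | c2 where "c2 \<in> W2" "v \<in> spt (F2 c2)"
        unfolding D_def by blast
      then show ?thesis
      proof cases
        case (1 c2) then show ?thesis using c11 \<open>c1 \<in> W1\<close> \<open>u \<in> spt (F1 c1)\<close> by blast
      next
        case (2 c2) then show ?thesis using c12 \<open>c1 \<in> W1\<close> \<open>u \<in> spt (F1 c1)\<close> by blast
      qed
    next
      case (2 c1)
      from v consider c2 where "c2 \<in> W1" "v \<in> spt (F1 c2)" | c2 where "c2 \<in> W2" "v \<in> spt (F2 c2)"
        unfolding D_def by blast
      then show ?thesis
      proof cases
        case (1 c2) then show ?thesis using c12 \<open>c1 \<in> W2\<close> \<open>u \<in> spt (F2 c1)\<close> by blast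
      next
        case (2 c2) then show ?thesis using c22 \<open>c1 \<in> W2\<close> \<open>u \<in> spt (F2 c1)\<close> by blast
      qed
    qed
  qed
  have inner1: "wa x S s c * (\<Sum>w\<in>D. F1 c w) = wa x S s c * real (card c)" if c: "c \<in> Pow S - {{}}" for c
  proof (cases "0 < wa x S s c")
    case True
    then have cW: "c \<in> W1" using c by (simp add: W1_def)
    have "(\<Sum>w\<in>D. F1 c w) = (\<Sum>w\<in>spt (F1 c). F1 c w)"
      by (rule sum.mono_neutral_right) (use fD cW in \<open>auto simp: D_def spt_def\<close>)
    then show ?thesis using m1[of c] c by (simp add: S_def)
  next
    case False
    then have "wa x S s c = 0" using wa_ge0[of x S s c] by simp
    then show ?thesis by simp
  qed
  have inner2: "wb x S s c * (\<Sum>w\<in>D. F2 c w) = wb x S s c * real (card c)" if c: "c \<in> Pow S - {{}}" for c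
  proof (cases "0 < wb x S s c")
    case True
    then have cW: "c \<in> W2" using c by (simp add: W2_def)
    have "(\<Sum>w\<in>D. F2 c w) = (\<Sum>w\<in>spt (F2 c). F2 c w)"
      by (rule sum.mono_neutral_right) (use fD cW in \<open>auto simp: D_def spt_def\<close>)
    then show ?thesis using m2[of c] c by (simp add: S_def)
  next
    case False
    then have "wb x S s c = 0" using wb_ge0[of x S s c] by simp
    then show ?thesis by simp
  qed
  have "sum y D = (\<Sum>w\<in>D. \<Sum>c\<in>Pow S - {{}}. wa x S s c * F1 c w + wb x S s c * F2 c w)"
    by (simp add: y)
  also have "\<dots> = (\<Sum>c\<in>Pow S - {{}}. \<Sum>w\<in>D. wa x S s c * F1 c w + wb x S s c * F2 c w)"
    by (rule sum.swap)
  also have "\<dots> = (\<Sum>c\<in>Pow S - {{}}. wa x S s c * (\<Sum>w\<in>D. F1 c w) + wb x S s c * (\<Sum>w\<in>D. F2 c w))"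
    by (simp add: sum.distrib sum_distrib_left)
  also have "\<dots> = (\<Sum>c\<in>Pow S - {{}}. wt x S c * real (card c))"
  proof (rule sum.cong[OF refl])
    fix c assume c: "c \<in> Pow S - {{}}"
    have "wa x S s c * (\<Sum>w\<in>D. F1 c w) + wb x S s c * (\<Sum>w\<in>D. F2 c w)
        = wa x S s c * real (card c) + wb x S s c * real (card c)" by (simp add: inner1[OF c] inner2[OF c])
    also have "\<dots> = (wa x S s c + wb x S s c) * real (card c)" by (simp add: distrib_right)
    also have "\<dots> = wt x S c * real (card c)" by (simp add: wa_wb)
    finally show "wa x S s c * (\<Sum>w\<in>D. F1 c w) + wb x S s c * (\<Sum>w\<in>D. F2 c w) = wt x S c * real (card c)" .
  qed
  also have "\<dots> = 1" using total_mass[OF fS nn] sum1 by (simp add: S_def)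
  finally have sD: "sum y D = 1" .
  then have "D \<noteq> {}" by auto
  then have Dn: "D \<in> nerve P'" using fD DP chD by (simp add: nerve_def chn_def)
  have "y \<in> closed_simplex D" using ynn sptD sD by (simp add: closed_simplex_iff)
  then show ?thesis using Dn unfolding y_def realization_carrier_def by blast
qed


lemma spt_PR:
  fixes x :: "'v \<Rightarrow> real"
  shows "spt (PR s F1 F2 x) \<subseteq> (\<Union>c\<in>Pow (spt x). spt (F1 c) \<union> spt (F2 c))"
proof
  fix w assume "w \<in> spt (PR s F1 F2 x)"
  then have "(\<Sum>c\<in>Pow (spt x) - {{}}. wa x (spt x) s c * F1 c w + wb x (spt x) s c * F2 c w) \<noteq> 0"
    by (simp add: spt_def PR_def prism_def)
  then obtain c where c: "c \<in> Pow (spt x) - {{}}" "wa x (spt x) s c * F1 c w + wb x (spt x) s c * F2 c w \<noteq> 0"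
    by (meson sum.not_neutral_contains_not_neutral)
  then have "F1 c w \<noteq> 0 \<or> F2 c w \<noteq> 0" by auto
  then show "w \<in> (\<Union>c\<in>Pow (spt x). spt (F1 c) \<union> spt (F2 c))" using c by (auto simp: spt_def)
qed

lemma cont_Min:
  fixes g :: "'v \<Rightarrow> 'z \<Rightarrow> real"
  assumes "finite c" "c \<noteq> {}" "\<And>v. v \<in> c \<Longrightarrow> continuous_map Z euclideanreal (g v)"
  shows "continuous_map Z euclideanreal (\<lambda>z. Min ((\<lambda>v. g v z) ` c))"
  using assms
proof (induction c rule: finite_ne_induct)
  case (singleton a) then show ?case by simp
next
  case (insert a F)
  have "(\<lambda>z. Min ((\<lambda>v. g v z) ` insert a F)) = (\<lambda>z. min (g a z) (Min ((\<lambda>v. g v z) ` F)))"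
    using insert by (simp add: Min_insert)
  then show ?case using insert by (simp add: continuous_map_real_min)
qed

lemma cont_Max0:
  fixes g :: "'v \<Rightarrow> 'z \<Rightarrow> real"
  assumes "finite T" "\<And>v. v \<in> T \<Longrightarrow> continuous_map Z euclideanreal (g v)"
  shows "continuous_map Z euclideanreal (\<lambda>z. Max (insert 0 ((\<lambda>v. g v z) ` T)))"
  using assms
proof (induction T rule: finite_induct)
  case empty then show ?case by simp
next
  case (insert a F)
  have "(\<lambda>z. Max (insert 0 ((\<lambda>v. g v z) ` insert a F))) = (\<lambda>z. max (g a z) (Max (insert 0 ((\<lambda>v. g v z) ` F))))"
  proof
    fix z
    have "insert 0 ((\<lambda>v. g v z) ` insert a F) = insert (g a z) (insert 0 ((\<lambda>v. g v z) ` F))" by auto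
    then show "Max (insert 0 ((\<lambda>v. g v z) ` insert a F)) = max (g a z) (Max (insert 0 ((\<lambda>v. g v z) ` F)))"
      using insert by (simp add: Max_insert)
  qed
  then show ?case using insert by (simp add: continuous_map_real_max)
qed

lemma prism_cont:
  fixes \<pi> :: "'z \<Rightarrow> 'v \<Rightarrow> real" and F1 F2 :: "'v set \<Rightarrow> 'w \<Rightarrow> real"
  assumes c\<pi>: "continuous_map Z PT \<pi>" and c\<tau>: "continuous_map Z euclideanreal \<tau>" and fE: "finite E"
  shows "continuous_map Z PT (\<lambda>z. prism E (\<tau> z) F1 F2 (\<pi> z))"
proof -
  have co: "continuous_map Z euclideanreal (\<lambda>z. \<pi> z v)" for v
    using c\<pi> unfolding continuous_map_componentwise_UNIV by blast
  have cwa: "continuous_map Z euclideanreal (\<lambda>z. wa (\<pi> z) E (\<tau> z) c)"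
    and cwb: "continuous_map Z euclideanreal (\<lambda>z. wb (\<pi> z) E (\<tau> z) c)" if c: "c \<in> Pow E - {{}}" for c
  proof -
    have fc: "finite c" "c \<noteq> {}" using c fE finite_subset by auto
    have m: "continuous_map Z euclideanreal (\<lambda>z. Min ((\<lambda>v. \<pi> z v) ` c))"
      by (rule cont_Min[OF fc]) (rule co)
    have l: "continuous_map Z euclideanreal (\<lambda>z. lo (\<pi> z) E c)"
      unfolding lo_def using cont_Max0[where T = "E - c" and g = "\<lambda>v z. \<pi> z v"] fE co by simp
    have k: "continuous_map Z euclideanreal (\<lambda>z. (0::real))" by simp
    show "continuous_map Z euclideanreal (\<lambda>z. wa (\<pi> z) E (\<tau> z) c)"
      unfolding wa_def by (intro continuous_map_real_max continuous_map_diff k m l c\<tau>)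
    show "continuous_map Z euclideanreal (\<lambda>z. wb (\<pi> z) E (\<tau> z) c)"
      unfolding wb_def by (intro continuous_map_real_max continuous_map_real_min continuous_map_diff k m l c\<tau>)
  qed
  show ?thesis
    unfolding continuous_map_componentwise_UNIV prism_def
  proof
    fix w
    show "continuous_map Z euclideanreal
          (\<lambda>z. \<Sum>c\<in>Pow E - {{}}. wa (\<pi> z) E (\<tau> z) c * F1 c w + wb (\<pi> z) E (\<tau> z) c * F2 c w)"
    proof (rule continuous_map_sum)
      show "finite (Pow E - {{}})" using fE by simp
    next
      fix c assume c: "c \<in> Pow E - {{}}"
      have k1: "continuous_map Z euclideanreal (\<lambda>z. F1 c w)" by simp
      have k2: "continuous_map Z euclideanreal (\<lambda>z. F2 c w)" by simp
      show "continuous_map Z euclideanreal (\<lambda>z. wa (\<pi> z) E (\<tau> z) c * F1 c w + wb (\<pi> z) E (\<tau> z) c * F2 c w)"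
        by (intro continuous_map_add continuous_map_real_mult cwa[OF c] cwb[OF c] k1 k2)
    qed
  qed
qed

lemma PR_cont:
  fixes \<pi> :: "'z \<Rightarrow> 'v \<Rightarrow> real" and F1 F2 :: "'v set \<Rightarrow> 'w \<Rightarrow> real"
  assumes c\<pi>: "continuous_map Z PT \<pi>" and c\<tau>: "continuous_map Z euclideanreal \<tau>" and fE: "finite E"
    and im: "\<And>z. z \<in> topspace Z \<Longrightarrow> (\<forall>v. 0 \<le> \<pi> z v) \<and> spt (\<pi> z) \<subseteq> E"
  shows "continuous_map Z PT (\<lambda>z. PR (\<tau> z) F1 F2 (\<pi> z))"
proof (rule continuous_map_eq[OF prism_cont[OF c\<pi> c\<tau> fE]])
  fix z assume "z \<in> topspace Z"
  then show "prism E (\<tau> z) F1 F2 (\<pi> z) = PR (\<tau> z) F1 F2 (\<pi> z)"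
    using im prism_indep[OF fE] by blast
qed

lemma PR_cont_real:
  fixes \<pi> :: "'z \<Rightarrow> 'v set \<Rightarrow> real" and F1 F2 :: "'v set set \<Rightarrow> 'w set \<Rightarrow> real"
  assumes cZ: "compact_space Z" and c\<pi>: "continuous_map Z (realization (nerve P)) \<pi>"
    and c\<tau>: "continuous_map Z euclideanreal \<tau>"
    and fin1: "\<And>c. finite c \<Longrightarrow> finite (spt (F1 c))" and fin2: "\<And>c. finite c \<Longrightarrow> finite (spt (F2 c))"
    and inc: "\<And>z. z \<in> topspace Z \<Longrightarrow> PR (\<tau> z) F1 F2 (\<pi> z) \<in> realization_carrier (nerve P')"
  shows "continuous_map Z (realization (nerve P')) (\<lambda>z. PR (\<tau> z) F1 F2 (\<pi> z))"
proof -
  have "compactin (realization (nerve P)) (\<pi> ` topspace Z)"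
    using image_compactin[OF cZ[unfolded compact_space_def] c\<pi>] .
  then obtain E where fE: "finite E" and E: "\<forall>x\<in>\<pi> ` topspace Z. spt x \<subseteq> E"
    using compact_finite_support by blast
  have incar: "\<pi> z \<in> realization_carrier (nerve P)" if zt: "z \<in> topspace Z" for z
    using continuous_map_image_subset_topspace[OF c\<pi>] zt unfolding topspace_realization by blast
  have im: "(\<forall>v. 0 \<le> \<pi> z v) \<and> spt (\<pi> z) \<subseteq> E" if zt: "z \<in> topspace Z" for z
  proof
    show "\<forall>v. 0 \<le> \<pi> z v" using incar[OF zt] unfolding carrier_iff by blast
    have "\<pi> z \<in> \<pi> ` topspace Z" using zt by (rule imageI)
    then show "spt (\<pi> z) \<subseteq> E" using E by blast
  qed
  have cPT: "continuous_map Z PT (\<lambda>z. PR (\<tau> z) F1 F2 (\<pi> z))"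
    by (rule PR_cont[OF cont_real_to_PT[OF c\<pi>] c\<tau> fE im])
  define E' where "E' = (\<Union>c\<in>Pow E. spt (F1 c) \<union> spt (F2 c))"
  have fc: "c \<in> Pow E \<Longrightarrow> finite c" for c using fE finite_subset by blast
  have fE': "finite E'" unfolding E'_def using fE fin1 fin2 fc by (intro finite_UN_I finite_UnI) auto
  show ?thesis
  proof (rule cont_into_real[OF cPT fE'])
    fix z assume z: "z \<in> topspace Z"
    have "(\<Union>c\<in>Pow (spt (\<pi> z)). spt (F1 c) \<union> spt (F2 c)) \<subseteq> E'"
      unfolding E'_def by (rule UN_mono) (use im[OF z] in auto)
    then have "spt (PR (\<tau> z) F1 F2 (\<pi> z)) \<subseteq> E'"
      using spt_PR[of "\<tau> z" F1 F2 "\<pi> z"] by (rule subset_trans[rotated])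
    then show "PR (\<tau> z) F1 F2 (\<pi> z) \<in> realization_carrier (nerve P') \<and> spt (PR (\<tau> z) F1 F2 (\<pi> z)) \<subseteq> E'"
      using inc[OF z] by blast
  qed
qed


definition Gf :: "'a set set \<Rightarrow> 'a set \<Rightarrow> 'a set set \<Rightarrow> 'a set" where
  "Gf Q A c = \<Union>(c \<inter> Q) \<union> (\<Union>c \<inter> A)"

definition Psi :: "'a set set \<Rightarrow> 'a set set \<Rightarrow> 'a set \<Rightarrow> real" where
  "Psi Q c = (if c \<subseteq> Q then Bf c else (\<lambda>w. if w = \<Union>c then real (card c) else 0))"

definition Phi :: "'a set set \<Rightarrow> 'a set \<Rightarrow> 'a set set \<Rightarrow> 'a set \<Rightarrow> real" where
  "Phi Q A c = (if c \<subseteq> Q then Bf c else (\<lambda>w. if w = Gf Q A c then real (card c) else 0))"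

lemma chn_sub: "chn D \<Longrightarrow> C \<subseteq> D \<Longrightarrow> chn C"
  unfolding chn_def by blast

lemma union_in_chain:
  fixes c :: "'a set set"
  assumes "finite c" "c \<noteq> {}" "chn c"
  shows "\<Union>c \<in> c"
  using assms
proof (induction c rule: finite_ne_induct)
  case (singleton a) then show ?case by simp
next
  case (insert a F)
  have chF: "chn F" using insert.prems chn_sub by blast
  have uF: "\<Union>F \<in> F" using insert.IH chF by blast
  have "a \<subseteq> \<Union>F \<or> \<Union>F \<subseteq> a" using insert.prems uF unfolding chn_def by blast
  then have "\<Union>(insert a F) = a \<or> \<Union>(insert a F) = \<Union>F" by auto
  then show ?case using uF by auto
qed

lemma spt_Bf: "spt (Bf c) = c"
  by (auto simp: spt_def Bf_def)

lemma Bf_nn [simp]: "0 \<le> Bf c w"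
  by (simp add: Bf_def)

lemma sum_Bf: "finite c \<Longrightarrow> sum (Bf c) c = real (card c)"
  by (simp add: Bf_def)

lemma nerve_chn: "c \<in> nerve S \<Longrightarrow> chn c"
  by (simp add: nerve_def chn_def)

lemma spt_single:
  assumes "finite c" "c \<noteq> {}"
  shows "spt (\<lambda>w. if w = u then real (card c) else 0) = {u}"
  using assms by (auto simp: spt_def)

lemma Psi_nQeq: "\<not> c \<subseteq> Q \<Longrightarrow> Psi Q c = (\<lambda>w. if w = \<Union>c then real (card c) else 0)"
  by (simp add: Psi_def)

lemma Phi_nQeq: "\<not> c \<subseteq> Q \<Longrightarrow> Phi Q A c = (\<lambda>w. if w = Gf Q A c then real (card c) else 0)"
  by (simp add: Phi_def)

lemma Psi_props:
  assumes "finite c" "c \<noteq> {}" "chn c"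
  shows "(\<forall>w. 0 \<le> Psi Q c w) \<and> finite (spt (Psi Q c)) \<and> spt (Psi Q c) \<subseteq> c \<and>
         sum (Psi Q c) (spt (Psi Q c)) = real (card c)"
proof (cases "c \<subseteq> Q")
  case True then show ?thesis using assms by (simp add: Psi_def spt_Bf sum_Bf)
next
  case False
  have u: "\<Union>c \<in> c" by (rule union_in_chain[OF assms])
  show ?thesis unfolding Psi_nQeq[OF False] spt_single[OF assms(1,2)] using u by simp
qed

lemma Phi_Q: "c \<subseteq> Q \<Longrightarrow> Phi Q A c = Bf c" and Psi_Q: "c \<subseteq> Q \<Longrightarrow> Psi Q c = Bf c"
  by (simp_all add: Phi_def Psi_def)

lemma Phi_nQ:
  assumes "finite c" "c \<noteq> {}" "\<not> c \<subseteq> Q"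
  shows "spt (Phi Q A c) = {Gf Q A c}" "sum (Phi Q A c) (spt (Phi Q A c)) = real (card c)"
        "\<forall>w. 0 \<le> Phi Q A c w"
  unfolding Phi_nQeq[OF assms(3)] spt_single[OF assms(1,2)] by simp_all

lemma Psi_nQ:
  assumes "finite c" "c \<noteq> {}" "\<not> c \<subseteq> Q"
  shows "spt (Psi Q c) = {\<Union>c}"
  unfolding Psi_nQeq[OF assms(3)] spt_single[OF assms(1,2)] by simp

lemma Gf_mono: "c \<subseteq> c' \<Longrightarrow> Gf Q A c \<subseteq> Gf Q A c'"
  unfolding Gf_def by blast

lemma Gf_sub: "Gf Q A c \<subseteq> \<Union>c"
  unfolding Gf_def by blast

lemma Gf_above: "q \<in> c \<Longrightarrow> q \<in> Q \<Longrightarrow> q \<subseteq> Gf Q A c"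
  unfolding Gf_def by blast

locale setting =
  fixes K :: "'a set set" and X Y :: "'a set"
  assumes sc: "simplicial_complex K"
begin

definition "AA = X \<inter> Y"
definition "PP = {\<sigma>\<in>K. \<sigma> \<subseteq> X \<or> \<sigma> \<subseteq> Y \<or> \<sigma> \<inter> AA \<noteq> {}}"
definition "QQ = full_subcomplex K X \<union> full_subcomplex K Y"

lemma QQ_PP: "QQ \<subseteq> PP"
  unfolding QQ_def PP_def full_subcomplex_def by blast

lemma PP_K: "PP \<subseteq> K"
  unfolding PP_def by blast

lemma K_down: "\<sigma> \<in> K \<Longrightarrow> \<tau> \<subseteq> \<sigma> \<Longrightarrow> \<tau> \<noteq> {} \<Longrightarrow> \<tau> \<in> K"
  using sc unfolding simplicial_complex_def by blast

lemma Gf_in_QQ: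
  assumes c: "finite c" "c \<noteq> {}" "chn c" "c \<subseteq> PP" "\<not> c \<subseteq> QQ"
  shows "Gf QQ AA c \<in> QQ"
proof -
  define \<mu> where "\<mu> = \<Union>c"
  have \<mu>c: "\<mu> \<in> c" unfolding \<mu>_def by (rule union_in_chain[OF c(1-3)])
  have \<mu>K: "\<mu> \<in> K" using \<mu>c c(4) PP_K by blast
  have \<mu>nX: "\<not> \<mu> \<subseteq> X"
  proof
    assume "\<mu> \<subseteq> X"
    then have "\<tau> \<in> QQ" if "\<tau> \<in> c" for \<tau>
    proof -
      have "\<tau> \<subseteq> \<mu>" using that \<mu>_def by blast
      moreover have "\<tau> \<in> K" using that c(4) PP_K by blast
      ultimately show ?thesis using \<open>\<mu> \<subseteq> X\<close> by (auto simp: QQ_def full_subcomplex_def)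
    qed
    then show False using c(5) by blast
  qed
  have \<mu>nY: "\<not> \<mu> \<subseteq> Y"
  proof
    assume "\<mu> \<subseteq> Y"
    then have "\<tau> \<in> QQ" if "\<tau> \<in> c" for \<tau>
    proof -
      have "\<tau> \<subseteq> \<mu>" using that \<mu>_def by blast
      moreover have "\<tau> \<in> K" using that c(4) PP_K by blast
      ultimately show ?thesis using \<open>\<mu> \<subseteq> Y\<close> by (auto simp: QQ_def full_subcomplex_def)
    qed
    then show False using c(5) by blast
  qed
  have \<mu>A: "\<mu> \<inter> AA \<noteq> {}" using \<mu>c c(4) \<mu>nX \<mu>nY by (auto simp: PP_def)
  define G where "G = Gf QQ AA c"
  have G\<mu>: "G \<subseteq> \<mu>" unfolding G_def \<mu>_def by (rule Gf_sub)
  have Gne: "G \<noteq> {}" using \<mu>A unfolding G_def Gf_def \<mu>_def by blast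
  have GK: "G \<in> K" using K_down[OF \<mu>K G\<mu> Gne] .
  have "G \<subseteq> X \<or> G \<subseteq> Y"
  proof (cases "c \<inter> QQ = {}")
    case True
    then have "G = \<mu> \<inter> AA" unfolding G_def Gf_def \<mu>_def by simp
    then show ?thesis unfolding AA_def by blast
  next
    case False
    have "chn (c \<inter> QQ)" using c(3) chn_sub by blast
    then have "\<Union>(c \<inter> QQ) \<in> c \<inter> QQ" using False c(1) by (intro union_in_chain) auto
    then have "\<Union>(c \<inter> QQ) \<subseteq> X \<or> \<Union>(c \<inter> QQ) \<subseteq> Y" by (auto simp: QQ_def full_subcomplex_def)
    then show ?thesis unfolding G_def Gf_def AA_def by blast
  qed
  then show ?thesis using GK unfolding G_def QQ_def full_subcomplex_def by blast
qed

lemma chain_of_carrier: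
  assumes "x \<in> realization_carrier (nerve PP)" "c \<subseteq> spt x" "c \<noteq> {}"
  shows "finite c" "chn c" "c \<subseteq> PP"
proof -
  have "spt x \<in> nerve PP" using assms(1) by (simp add: carrier_iff)
  then have "finite (spt x)" "chn (spt x)" "spt x \<subseteq> PP" using nerve_chn by (auto simp: nerve_def)
  then show "finite c" "chn c" "c \<subseteq> PP" using assms(2) chn_sub finite_subset by blast+
qed

lemma Phi_m:
  assumes x: "x \<in> realization_carrier (nerve PP)" and c: "c \<subseteq> spt x" "c \<noteq> {}"
  shows "(\<forall>w. 0 \<le> Phi QQ AA c w) \<and> finite (spt (Phi QQ AA c)) \<and> spt (Phi QQ AA c) \<subseteq> QQ \<and>
         sum (Phi QQ AA c) (spt (Phi QQ AA c)) = real (card c)"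
proof -
  note cc = chain_of_carrier[OF x c]
  show ?thesis
  proof (cases "c \<subseteq> QQ")
    case True then show ?thesis using cc by (simp add: Phi_Q spt_Bf sum_Bf)
  next
    case False
    then show ?thesis using Phi_nQ[OF cc(1) c(2) False] Gf_in_QQ[OF cc(1) c(2) cc(2,3) False] by simp
  qed
qed

lemma Psi_m:
  assumes x: "x \<in> realization_carrier (nerve PP)" and c: "c \<subseteq> spt x" "c \<noteq> {}"
  shows "(\<forall>w. 0 \<le> Psi QQ c w) \<and> finite (spt (Psi QQ c)) \<and> spt (Psi QQ c) \<subseteq> PP \<and>
         sum (Psi QQ c) (spt (Psi QQ c)) = real (card c)"
  using Psi_props[OF chain_of_carrier(1)[OF x c] c(2) chain_of_carrier(2)[OF x c], of QQ]
    chain_of_carrier(3)[OF x c] by blast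

lemma Bf_m:
  assumes x: "x \<in> realization_carrier (nerve PP)" and c: "c \<subseteq> spt x" "c \<noteq> {}"
  shows "(\<forall>w. 0 \<le> Bf c w) \<and> finite (spt (Bf c)) \<and> spt (Bf c) \<subseteq> PP \<and>
         sum (Bf c) (spt (Bf c)) = real (card c)"
  using chain_of_carrier[OF x c] by (simp add: spt_Bf sum_Bf)

lemma spt_Psi_sub:
  assumes x: "x \<in> realization_carrier (nerve PP)" and c: "c \<subseteq> spt x" "c \<noteq> {}"
  shows "spt (Psi QQ c) \<subseteq> c"
  using Psi_props[OF chain_of_carrier(1)[OF x c] c(2) chain_of_carrier(2)[OF x c], of QQ] by blast

lemma chn_spt:
  assumes x: "x \<in> realization_carrier (nerve PP)" and "D \<subseteq> spt x"
  shows "chn D"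
proof -
  have "spt x \<in> nerve PP" using x by (simp add: carrier_iff)
  then show ?thesis using assms(2) nerve_chn chn_sub by blast
qed

lemma ch_Phi_Phi:
  assumes x: "x \<in> realization_carrier (nerve PP)" and cc: "c \<subseteq> c'" "c' \<subseteq> spt x" "c \<noteq> {}"
  shows "chn (spt (Phi QQ AA c) \<union> spt (Phi QQ AA c'))"
proof -
  have c'ne: "c' \<noteq> {}" using cc by blast
  note i = chain_of_carrier[OF x cc(2) c'ne]
  have fc: "finite c" using i(1) cc(1) finite_subset by blast
  show ?thesis
  proof (cases "c' \<subseteq> QQ")
    case True
    then have "c \<subseteq> QQ" using cc by blast
    then have "spt (Phi QQ AA c) \<union> spt (Phi QQ AA c') = c'" using True cc(1) by (auto simp: Phi_Q spt_Bf)
    then show ?thesis using chn_spt[OF x cc(2)] by simp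
  next
    case False
    note sc' = Phi_nQ(1)[OF i(1) c'ne False]
    show ?thesis
    proof (cases "c \<subseteq> QQ")
      case True
      have "spt (Phi QQ AA c) = c" using True by (simp add: Phi_Q spt_Bf)
      moreover have "chn c" using chn_spt[OF x] cc by blast
      moreover have "q \<subseteq> Gf QQ AA c'" if "q \<in> c" for q
        using Gf_above[of q c' QQ AA] that True cc(1) by blast
      ultimately show ?thesis using sc' unfolding chn_def by auto
    next
      case cnQ: False
      have "spt (Phi QQ AA c) = {Gf QQ AA c}" by (rule Phi_nQ(1)[OF fc cc(3) cnQ])
      then show ?thesis using sc' Gf_mono[OF cc(1), of QQ AA] unfolding chn_def by auto
    qed
  qed
qed

lemma ch_Psi_Psi:
  assumes x: "x \<in> realization_carrier (nerve PP)" and cc: "c \<subseteq> c'" "c' \<subseteq> spt x" "c \<noteq> {}"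
  shows "chn (spt (Psi QQ c) \<union> spt (Psi QQ c'))"
proof -
  have "spt (Psi QQ c) \<subseteq> c" "spt (Psi QQ c') \<subseteq> c'"
    using spt_Psi_sub[OF x] cc by (blast, blast)
  then have "spt (Psi QQ c) \<union> spt (Psi QQ c') \<subseteq> spt x" using cc by blast
  then show ?thesis by (rule chn_spt[OF x])
qed

lemma ch_Psi_Bf:
  assumes x: "x \<in> realization_carrier (nerve PP)" and cc: "c \<subseteq> c'" "c' \<subseteq> spt x" "c \<noteq> {}"
  shows "chn (spt (Psi QQ c) \<union> spt (Bf c'))" "chn (spt (Bf c) \<union> spt (Bf c'))"
proof -
  have "spt (Psi QQ c) \<subseteq> c" using spt_Psi_sub[OF x] cc by blast
  then have "spt (Psi QQ c) \<union> spt (Bf c') \<subseteq> spt x" using cc by (auto simp: spt_Bf)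
  then show "chn (spt (Psi QQ c) \<union> spt (Bf c'))" by (rule chn_spt[OF x])
  have "spt (Bf c) \<union> spt (Bf c') \<subseteq> spt x" using cc by (auto simp: spt_Bf)
  then show "chn (spt (Bf c) \<union> spt (Bf c'))" by (rule chn_spt[OF x])
qed

lemma ch_Phi_Psi:
  assumes x: "x \<in> realization_carrier (nerve PP)" and cc: "c \<subseteq> c'" "c' \<subseteq> spt x" "c \<noteq> {}"
  shows "chn (spt (Phi QQ AA c) \<union> spt (Psi QQ c'))"
proof -
  have c'ne: "c' \<noteq> {}" using cc by blast
  note i = chain_of_carrier[OF x cc(2) c'ne]
  have fc: "finite c" using i(1) cc(1) finite_subset by blast
  show ?thesis
  proof (cases "c \<subseteq> QQ")
    case True
    have "spt (Phi QQ AA c) \<subseteq> c" using True by (simp add: Phi_Q spt_Bf)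
    moreover have "spt (Psi QQ c') \<subseteq> c'" using spt_Psi_sub[OF x cc(2) c'ne] .
    ultimately have "spt (Phi QQ AA c) \<union> spt (Psi QQ c') \<subseteq> spt x" using cc by blast
    then show ?thesis by (rule chn_spt[OF x])
  next
    case False
    then have c'nQ: "\<not> c' \<subseteq> QQ" using cc by blast
    have "spt (Phi QQ AA c) = {Gf QQ AA c}" by (rule Phi_nQ(1)[OF fc cc(3) False])
    moreover have "spt (Psi QQ c') = {\<Union>c'}" by (rule Psi_nQ[OF i(1) c'ne c'nQ])
    moreover have "Gf QQ AA c \<subseteq> \<Union>c'" using Gf_sub[of QQ AA c] cc(1) by blast
    ultimately show ?thesis unfolding chn_def by auto
  qed
qed

end


lemma compact_nsphere: "compact_space (nsphere n)"
proof -
  define S where "S = {x::nat\<Rightarrow>real. (\<Sum>i\<le>n. x i ^ 2) = 1 \<and> (\<forall>i>n. x i = 0)}"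
  define B where "B = (\<lambda>i::nat. if i \<le> n then {-1..1::real} else {0})"
  have box: "S \<subseteq> PiE UNIV B"
  proof
    fix x assume x: "x \<in> S"
    have "x i \<in> B i" for i
    proof (cases "i \<le> n")
      case True
      have "x i ^ 2 \<le> (\<Sum>j\<le>n. x j ^ 2)"
        by (rule member_le_sum) (use True in auto)
      then have "x i ^ 2 \<le> 1" using x by (simp add: S_def)
      then have "\<bar>x i\<bar> \<le> 1" by (simp add: abs_square_le_1)
      then show ?thesis using True by (simp add: B_def abs_le_iff)
    next
      case False then show ?thesis using x by (simp add: B_def S_def)
    qed
    then show "x \<in> PiE UNIV B" by auto
  qed
  have cB: "compactin (powertop_real UNIV) (PiE UNIV B)"
    unfolding compactin_PiE
    by (rule disjI2) (auto simp: B_def compactin_euclidean_iff)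
  have eq: "S = (\<Inter>i. {x. x i \<in> (if n < i then {0} else UNIV)}) \<inter> {x. (\<Sum>i\<le>n. x i ^ 2) \<in> {1}}"
  proof (rule set_eqI, rule iffI)
    fix x :: "nat \<Rightarrow> real" assume "x \<in> S"
    then show "x \<in> (\<Inter>i. {x. x i \<in> (if n < i then {0} else UNIV)}) \<inter> {x. (\<Sum>i\<le>n. x i ^ 2) \<in> {1}}"
      unfolding S_def by auto
  next
    fix x :: "nat \<Rightarrow> real"
    assume h: "x \<in> (\<Inter>i. {x. x i \<in> (if n < i then {0} else UNIV)}) \<inter> {x. (\<Sum>i\<le>n. x i ^ 2) \<in> {1}}"
    have "x i = 0" if "n < i" for i
    proof -
      have "x i \<in> (if n < i then {0} else UNIV)" using h by blast
      then show ?thesis using that by simp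
    qed
    then show "x \<in> S" using h unfolding S_def by simp
  qed
  have c1: "closedin (powertop_real UNIV) {x::nat\<Rightarrow>real. x i \<in> (if n < i then {0} else UNIV)}" for i
  proof -
    have "closedin (powertop_real UNIV) {x \<in> topspace (powertop_real UNIV). x i \<in> (if n < i then {0} else UNIV)}"
      by (rule closedin_continuous_map_preimage[OF continuous_map_product_projection]) auto
    then show ?thesis by simp
  qed
  have c2: "closedin (powertop_real UNIV) {x::nat\<Rightarrow>real. (\<Sum>i\<le>n. x i ^ 2) \<in> {1}}"
  proof -
    have "continuous_map (powertop_real UNIV) euclideanreal (\<lambda>x::nat\<Rightarrow>real. \<Sum>i\<le>n. x i ^ 2)"
      by (intro continuous_map_sum continuous_map_real_pow) (auto intro: continuous_map_product_projection)
    then have "closedin (powertop_real UNIV) {x \<in> topspace (powertop_real UNIV). (\<Sum>i\<le>n. x i ^ 2) \<in> {1}}"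
      by (rule closedin_continuous_map_preimage) auto
    then show ?thesis by simp
  qed
  have "closedin (powertop_real UNIV) S"
    unfolding eq by (intro closedin_Int closedin_Inter c2) (use c1 in auto)
  then have "compactin (powertop_real UNIV) S" by (rule closed_compactin[OF cB box])
  then show ?thesis unfolding nsphere S_def[symmetric] by (rule compact_space_subtopology)
qed

lemma compact_I: "compact_space (top_of_set {0..1::real})"
  by (simp add: compact_space_subtopology compactin_euclidean_iff)

lemma compact_prod_I: "compact_space (prod_topology (top_of_set {0..1::real}) (nsphere n))"
  using compact_I compact_nsphere by (simp add: compact_space_prod_topology)

lemma cont_fst_I: "continuous_map (prod_topology (top_of_set {0..1::real}) Z) euclideanreal fst"
  using continuous_map_fst continuous_map_into_fulltopology by blast

lemma homotopic_with_from:
  assumes cH: "continuous_map (prod_topology (top_of_set {0..1::real}) Z) Y H"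
    and h0: "\<And>z. z \<in> topspace Z \<Longrightarrow> H (0, z) = f z"
    and h1: "\<And>z. z \<in> topspace Z \<Longrightarrow> H (1, z) = g z"
    and hP: "\<And>t. t \<in> {0..1} \<Longrightarrow> P (\<lambda>z. H (t, z))"
    and Pcong: "\<And>h k. (\<forall>z\<in>topspace Z. h z = k z) \<Longrightarrow> P h = P k"
  shows "homotopic_with P Z Y f g"
  unfolding homotopic_with_def
proof (intro exI conjI allI ballI)
  define H' where "H' = (\<lambda>(t, z). if z \<in> topspace Z then H (t, z) else if t = 1 then g z else f z)"
  show "continuous_map (prod_topology (top_of_set {0..1}) Z) Y H'"
  proof (rule continuous_map_eq[OF cH])
    fix p assume "p \<in> topspace (prod_topology (top_of_set {0..1::real}) Z)"
    then show "H p = H' p" by (auto simp: H'_def)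
  qed
  fix z
  show "H' (0, z) = f z" using h0 by (auto simp: H'_def)
  show "H' (1, z) = g z" using h1 by (auto simp: H'_def)
next
  fix t :: real assume t: "t \<in> {0..1}"
  define H' where "H' = (\<lambda>(t, z). if z \<in> topspace Z then H (t, z) else if t = 1 then g z else f z)"
  have "P (\<lambda>z. H' (t, z)) = P (\<lambda>z. H (t, z))" by (rule Pcong) (auto simp: H'_def)
  then show "P (\<lambda>x. (\<lambda>(t, z). if z \<in> topspace Z then H (t, z) else if t = 1 then g z else f z) (t, x))"
    using hP[OF t] by (simp add: H'_def)
qed

lemma cont_id_real:
  assumes "Q \<subseteq> P"
  shows "continuous_map (realization (nerve Q)) (realization (nerve P)) id"
  unfolding continuous_map_def
proof (intro conjI allI impI)
  have "realization_carrier (nerve Q) \<subseteq> realization_carrier (nerve P)"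
    using nerve_mono[OF assms] unfolding realization_carrier_def by blast
  then show "id \<in> topspace (realization (nerve Q)) \<rightarrow> topspace (realization (nerve P))"
    by (auto simp: topspace_realization)
  fix U assume U: "openin (realization (nerve P)) U"
  show "openin (realization (nerve Q)) {x \<in> topspace (realization (nerve Q)). id x \<in> U}"
    unfolding openin_realization topspace_realization
  proof (intro conjI ballI)
    show "{x \<in> realization_carrier (nerve Q). id x \<in> U} \<subseteq> realization_carrier (nerve Q)" by blast
    fix \<sigma> assume \<sigma>: "\<sigma> \<in> nerve Q"
    then have \<sigma>P: "\<sigma> \<in> nerve P" using nerve_mono[OF assms] by blast
    have "{x \<in> realization_carrier (nerve Q). id x \<in> U} \<inter> closed_simplex \<sigma> = U \<inter> closed_simplex \<sigma>"
      using closed_simplex_sub_carrier[OF \<sigma>] by auto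
    then show "openin (subtopology PT (closed_simplex \<sigma>)) ({x \<in> realization_carrier (nerve Q). id x \<in> U} \<inter> closed_simplex \<sigma>)"
      using U \<sigma>P by (simp add: openin_realization)
  qed
qed


context setting
begin

lemma carrier_QP: "realization_carrier (nerve QQ) \<subseteq> realization_carrier (nerve PP)"
  using nerve_mono[OF QQ_PP] unfolding realization_carrier_def by blast

lemma Phi_mP:
  assumes x: "x \<in> realization_carrier (nerve PP)" and c: "c \<subseteq> spt x" "c \<noteq> {}"
  shows "(\<forall>w. 0 \<le> Phi QQ AA c w) \<and> finite (spt (Phi QQ AA c)) \<and> spt (Phi QQ AA c) \<subseteq> PP \<and>
         sum (Phi QQ AA c) (spt (Phi QQ AA c)) = real (card c)"
  using Phi_m[OF x c] QQ_PP by blast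

lemma inQ: "y \<in> realization_carrier (nerve PP) \<Longrightarrow> PR s (Phi QQ AA) (Phi QQ AA) y \<in> realization_carrier (nerve QQ)"
  by (rule PR_in_carrier[OF _ Phi_m Phi_m ch_Phi_Phi ch_Phi_Phi ch_Phi_Phi])

lemma inP1: "y \<in> realization_carrier (nerve PP) \<Longrightarrow> PR s (Psi QQ) Bf y \<in> realization_carrier (nerve PP)"
  by (rule PR_in_carrier[OF _ Psi_m Bf_m ch_Psi_Psi ch_Psi_Bf(2) ch_Psi_Bf(1)])

lemma inP2: "y \<in> realization_carrier (nerve PP) \<Longrightarrow> PR s (Phi QQ AA) (Psi QQ) y \<in> realization_carrier (nerve PP)"
  by (rule PR_in_carrier[OF _ Phi_mP Psi_m ch_Phi_Phi ch_Psi_Psi ch_Phi_Psi])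

lemma stat:
  assumes y: "y \<in> realization_carrier (nerve QQ)"
  shows "PR s (Phi QQ AA) (Phi QQ AA) y = y" "PR s (Psi QQ) Bf y = y" "PR s (Phi QQ AA) (Psi QQ) y = y"
proof -
  have fs: "finite (spt y)" by (rule carrier_finite_spt[OF y])
  have nn: "\<forall>v. 0 \<le> y v" using y by (simp add: carrier_iff)
  have "spt y \<in> nerve QQ" using y by (simp add: carrier_iff)
  then have sQ: "spt y \<subseteq> QQ" by (simp add: nerve_def)
  have Q: "c \<subseteq> spt y \<Longrightarrow> c \<subseteq> QQ" for c using sQ by blast
  show "PR s (Phi QQ AA) (Phi QQ AA) y = y" by (rule PR_stat[OF fs nn]) (simp add: Phi_Q Q)
  show "PR s (Psi QQ) Bf y = y" by (rule PR_stat[OF fs nn]) (simp add: Psi_Q Q)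
  show "PR s (Phi QQ AA) (Psi QQ) y = y" by (rule PR_stat[OF fs nn]) (simp add: Phi_Q Psi_Q Q)
qed

lemma fin_Phi: "finite c \<Longrightarrow> finite (spt (Phi QQ AA c))"
proof -
  assume fc: "finite c"
  show ?thesis
  proof (cases "c \<subseteq> QQ")
    case True then show ?thesis using fc by (simp add: Phi_Q spt_Bf)
  next
    case False
    then have "c \<noteq> {}" by auto
    then show ?thesis using Phi_nQ(1)[OF fc _ False] by simp
  qed
qed

lemma fin_Psi: "finite c \<Longrightarrow> finite (spt (Psi QQ c))"
proof -
  assume fc: "finite c"
  show ?thesis
  proof (cases "c \<subseteq> QQ")
    case True then show ?thesis using fc by (simp add: Psi_Q spt_Bf)
  next
    case False
    then have "c \<noteq> {}" by auto
    then show ?thesis using Psi_nQ[OF fc _ False] by simp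
  qed
qed

lemma fin_Bf: "finite c \<Longrightarrow> finite (spt (Bf c))"
  by (simp add: spt_Bf)

lemma base_in: "sphere_base \<in> topspace (nsphere n)"
  unfolding sphere_base_def by (rule in_topspace_nsphere)

lemma Pcong_base:
  "(\<forall>z\<in>topspace (nsphere n). h z = k z) \<Longrightarrow> (h sphere_base = x) = (k sphere_base = x)"
  using base_in by metis

lemma cont_in_carrier:
  "continuous_map Z (realization L) g \<Longrightarrow> z \<in> topspace Z \<Longrightarrow> g z \<in> realization_carrier L"
  using continuous_map_image_subset_topspace[of Z "realization L" g] by (auto simp: topspace_realization)

lemma surj:
  assumes x: "x \<in> realization_carrier (nerve QQ)"
    and g: "continuous_map (nsphere n) (realization (nerve PP)) g" and gb: "g sphere_base = x"
  shows "\<exists>h. continuous_map (nsphere n) (realization (nerve QQ)) h \<and> h sphere_base = x \<and>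
             homotopic_with (\<lambda>k. k sphere_base = x) (nsphere n) (realization (nerve PP)) h g"
proof -
  let ?S = "nsphere n" and ?RP = "realization (nerve PP)" and ?RQ = "realization (nerve QQ)"
  let ?I = "top_of_set {0..1::real}"
  have gP: "g z \<in> realization_carrier (nerve PP)" if "z \<in> topspace ?S" for z
    by (rule cont_in_carrier[OF g that])
  have gfs: "finite (spt (g z))" "\<forall>v. 0 \<le> g z v" "\<forall>v. g z v \<le> 1" if "z \<in> topspace ?S" for z
  proof -
    show "finite (spt (g z))" by (rule carrier_finite_spt[OF gP[OF that]])
    show "\<forall>v. 0 \<le> g z v" using gP[OF that] by (simp add: carrier_iff)
    show "\<forall>v. g z v \<le> 1" using carrier_le1[OF gP[OF that]] by blast
  qed
  define h where "h = (\<lambda>z. PR 0 (Phi QQ AA) (Phi QQ AA) (g z))"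
  have c0: "continuous_map ?S euclideanreal (\<lambda>z. 0::real)" by simp
  have ch: "continuous_map ?S ?RQ h"
    unfolding h_def
    by (rule PR_cont_real[OF compact_nsphere g c0 fin_Phi fin_Phi inQ[OF gP]])
  have hb: "h sphere_base = x" unfolding h_def gb by (rule stat(1)[OF x])
  have cgs: "continuous_map (prod_topology ?I ?S) ?RP (\<lambda>p. g (snd p))"
    using continuous_map_compose[OF continuous_map_snd g] by (simp add: o_def)
  have ct: "continuous_map (prod_topology ?I ?S) euclideanreal (\<lambda>p. 1 - fst p)"
    by (intro continuous_map_diff cont_fst_I) simp
  have snd_top: "snd p \<in> topspace ?S" if "p \<in> topspace (prod_topology ?I ?S)" for p
    using that by auto
  have xP: "x \<in> realization_carrier (nerve PP)" using x carrier_QP by blast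
  have h1: "homotopic_with (\<lambda>k. k sphere_base = x) ?S ?RP g (\<lambda>z. LY (Psi QQ) (g z))"
  proof (rule homotopic_with_from[where H = "\<lambda>p. PR (1 - fst p) (Psi QQ) Bf (g (snd p))"])
    show "continuous_map (prod_topology ?I ?S) ?RP (\<lambda>p. PR (1 - fst p) (Psi QQ) Bf (g (snd p)))"
      by (rule PR_cont_real[OF compact_prod_I cgs ct fin_Psi fin_Bf inP1[OF gP[OF snd_top]]])
    fix z assume z: "z \<in> topspace ?S"
    show "PR (1 - fst (0::real, z)) (Psi QQ) Bf (g (snd (0::real, z))) = g z"
      using PR_1[of "g z" "Psi QQ" Bf, OF gfs(1,3)[OF z]] LY_Bf[OF gfs(1,2)[OF z]] by simp
    show "PR (1 - fst (1::real, z)) (Psi QQ) Bf (g (snd (1::real, z))) = LY (Psi QQ) (g z)"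
      using PR_0[of "g z" "Psi QQ" Bf, OF gfs(1,2)[OF z]] by simp
  next
    fix t :: real
    show "(\<lambda>z. PR (1 - fst (t, z)) (Psi QQ) Bf (g (snd (t, z)))) sphere_base = x"
      using stat(2)[OF x] gb by simp
  next
    fix h k :: "(nat \<Rightarrow> real) \<Rightarrow> 'a set \<Rightarrow> real"
    assume "\<forall>z\<in>topspace ?S. h z = k z"
    then show "(h sphere_base = x) = (k sphere_base = x)" by (rule Pcong_base)
  qed
  have h2: "homotopic_with (\<lambda>k. k sphere_base = x) ?S ?RP (\<lambda>z. LY (Psi QQ) (g z)) h"
  proof (rule homotopic_with_from[where H = "\<lambda>p. PR (1 - fst p) (Phi QQ AA) (Psi QQ) (g (snd p))"])
    show "continuous_map (prod_topology ?I ?S) ?RP (\<lambda>p. PR (1 - fst p) (Phi QQ AA) (Psi QQ) (g (snd p)))"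
      by (rule PR_cont_real[OF compact_prod_I cgs ct fin_Phi fin_Psi inP2[OF gP[OF snd_top]]])
    fix z assume z: "z \<in> topspace ?S"
    show "PR (1 - fst (0::real, z)) (Phi QQ AA) (Psi QQ) (g (snd (0::real, z))) = LY (Psi QQ) (g z)"
      using PR_1[of "g z" "Phi QQ AA" "Psi QQ", OF gfs(1,3)[OF z]] by simp
    show "PR (1 - fst (1::real, z)) (Phi QQ AA) (Psi QQ) (g (snd (1::real, z))) = h z"
      using PR_0[of "g z" "Phi QQ AA" "Psi QQ", OF gfs(1,2)[OF z]]
        PR_0[of "g z" "Phi QQ AA" "Phi QQ AA", OF gfs(1,2)[OF z]] unfolding h_def by simp
  next
    fix t :: real
    show "(\<lambda>z. PR (1 - fst (t, z)) (Phi QQ AA) (Psi QQ) (g (snd (t, z)))) sphere_base = x"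
      using stat(3)[OF x] gb by simp
  next
    fix h k :: "(nat \<Rightarrow> real) \<Rightarrow> 'a set \<Rightarrow> real"
    assume "\<forall>z\<in>topspace ?S. h z = k z"
    then show "(h sphere_base = x) = (k sphere_base = x)" by (rule Pcong_base)
  qed
  have "homotopic_with (\<lambda>k. k sphere_base = x) ?S ?RP h g"
    using homotopic_with_trans[OF h1 h2] by (simp add: homotopic_with_sym)
  then show ?thesis using ch hb by blast
qed

lemma inj:
  assumes x: "x \<in> realization_carrier (nerve QQ)"
    and h1: "continuous_map (nsphere n) (realization (nerve QQ)) h1" and h1b: "h1 sphere_base = x"
    and h2: "continuous_map (nsphere n) (realization (nerve QQ)) h2" and h2b: "h2 sphere_base = x"
    and hom: "homotopic_with (\<lambda>k. k sphere_base = x) (nsphere n) (realization (nerve PP)) h1 h2"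
  shows "homotopic_with (\<lambda>k. k sphere_base = x) (nsphere n) (realization (nerve QQ)) h1 h2"
proof -
  let ?S = "nsphere n" and ?RP = "realization (nerve PP)" and ?RQ = "realization (nerve QQ)"
  let ?I = "top_of_set {0..1::real}"
  obtain F where F: "continuous_map (prod_topology ?I ?S) ?RP F"
    and F0: "\<And>z. F (0, z) = h1 z" and F1: "\<And>z. F (1, z) = h2 z"
    and Fb: "\<And>t. t \<in> {0..1} \<Longrightarrow> F (t, sphere_base) = x"
    using hom unfolding homotopic_with_def by auto
  have FP: "F p \<in> realization_carrier (nerve PP)" if "p \<in> topspace (prod_topology ?I ?S)" for p
    by (rule cont_in_carrier[OF F that])
  have c0: "continuous_map (prod_topology ?I ?S) euclideanreal (\<lambda>p. 0::real)" by simp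
  show ?thesis
  proof (rule homotopic_with_from[where H = "\<lambda>p. PR 0 (Phi QQ AA) (Phi QQ AA) (F p)"])
    show "continuous_map (prod_topology ?I ?S) ?RQ (\<lambda>p. PR 0 (Phi QQ AA) (Phi QQ AA) (F p))"
      by (rule PR_cont_real[OF compact_prod_I F c0 fin_Phi fin_Phi inQ[OF FP]])
    fix z assume z: "z \<in> topspace ?S"
    show "PR 0 (Phi QQ AA) (Phi QQ AA) (F (0, z)) = h1 z"
      using stat(1)[OF cont_in_carrier[OF h1 z]] F0 by simp
    show "PR 0 (Phi QQ AA) (Phi QQ AA) (F (1, z)) = h2 z"
      using stat(1)[OF cont_in_carrier[OF h2 z]] F1 by simp
  next
    fix t :: real assume t: "t \<in> {0..1}"
    show "(\<lambda>z. PR 0 (Phi QQ AA) (Phi QQ AA) (F (t, z))) sphere_base = x"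
      using stat(1)[OF x] Fb[OF t] by simp
  next
    fix h k :: "(nat \<Rightarrow> real) \<Rightarrow> 'a set \<Rightarrow> real"
    assume "\<forall>z\<in>topspace ?S. h z = k z"
    then show "(h sphere_base = x) = (k sphere_base = x)" by (rule Pcong_base)
  qed
qed

lemma main: "poset_inclusion_weak_equivalence QQ PP"
  unfolding poset_inclusion_weak_equivalence_def weak_homotopy_equivalence_def
  using QQ_PP cont_id_real[OF QQ_PP] surj inj by (simp add: topspace_realization)

end


theorem proposition7p3:
  fixes K :: "'a set set" and X Y :: "'a set"
  assumes "simplicial_complex K"
    and "X \<union> Y = vertex_set K"
  defines "A \<equiv> X \<inter> Y"
  defines "P \<equiv> {\<sigma>\<in>K. \<sigma> \<subseteq> X \<or> \<sigma> \<subseteq> Y \<or> \<sigma> \<inter> A \<noteq> {}}"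
  shows "poset_inclusion_weak_equivalence (full_subcomplex K X \<union> full_subcomplex K Y) P"
proof -
  interpret setting K X Y by unfold_locales (rule assms(1))
  have "P = PP" unfolding P_def A_def PP_def AA_def by (rule refl)
  then show ?thesis using main unfolding QQ_def by simp
qed

end
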